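(* Let $4\mid n$, $n\ge 8$, and let $G=\mathrm{P}\mathcal G_n$ be the projective Clifford-cyclotomic group, with a fixed isomorphism $G\cong S_4\ast_{D_4}D_n$. Suppose $G$ acts on a tree $X$ without terminal vertices, possibly with inversions, with finite stabilizers, such that the quotient graph of groups $X/G$ is finite. Then there exists a vertex of $X$ fixed by the factor $S_4$ which has valence $3$.
   Context: $\zeta_n=e^{2\pi i/n}$; $\mathcal G_n=\langle H,T_n\rangle\subset\mathrm U_2({\mathbf Z}[\zeta_n,1/2])$ with $H=\frac12\begin{pmatrix}1+i&1+i\\1+i&-1-i\end{pmatrix}$ and $T_n=\begin{pmatrix}1&0\\0&\zeta_n\end{pmatrix}$, and $\mathrm P\mathcal G_n$ is $\mathcal G_n$ modulo scalars. By a theorem of Radin and Sadun, $\mathrm P\mathcal G_n$ is isomorphic to an amalgamated free product $S_4\ast_{D_4}D_n$ of the symmetric group $S_4$ and a dihedral group $D_n$ over a dihedral subgroup $D_4$; "the factor $S_4$" refers to the image of $S_4$ under this fixed isomorphism. The valence of a vertex is the number of edges incident to it. *)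

theory Defs
  imports "HOL-Analysis.Analysis" "HOL-Algebra.Algebra"
begin

definition zeta :: "nat \<Rightarrow> complex" where
  "zeta n = cis (2 * pi / real n)"

definition Hmat :: "complex^2^2" where
  "Hmat = (\<chi> i j. (if i = 2 \<and> j = 2 then -1 else 1) * ((1 + \<i>) / 2))"

definition Tmat :: "nat \<Rightarrow> complex^2^2" where
  "Tmat n = (\<chi> i j. if i = j then (if i = 1 then 1 else zeta n) else 0)"

definition GL2 :: "(complex^2^2) monoid" where
  "GL2 = \<lparr>carrier = {A. invertible A}, mult = (**), one = mat 1\<rparr>"

definition CG :: "nat \<Rightarrow> (complex^2^2) monoid" where
  "CG n = GL2\<lparr>carrier := generate GL2 {Hmat, Tmat n}\<rparr>"

definition scalars :: "nat \<Rightarrow> (complex^2^2) set" where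
  "scalars n = {A \<in> carrier (CG n). \<exists>c. A = mat c}"

definition PCG :: "nat \<Rightarrow> (complex^2^2) set monoid" where
  "PCG n = CG n Mod scalars n"

text \<open>Dihedral group of order 2m, as the symmetries of the m-gon with vertices 0..m-1.\<close>
definition dihedral_group :: "nat \<Rightarrow> (nat \<Rightarrow> nat) monoid" where
  "dihedral_group m =
     \<lparr>carrier = {(\<lambda>i. if i < m then (k + i) mod m else i) | k. k < m}
             \<union> {(\<lambda>i. if i < m then (k + m - i) mod m else i) | k. k < m},
      mult = (\<circ>), one = id\<rparr>"

text \<open>G = A *_C B internally: A, B subgroups, C = A \<inter> B, A \<union> B generates G,
  and every nonempty reduced word (alternating between A - C and B - C) is nontrivial.\<close>
definition alternating :: "'a set \<Rightarrow> 'a set \<Rightarrow> 'a list \<Rightarrow> bool" where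
  "alternating P Q ws \<longleftrightarrow>
     (\<forall>i < length ws. ws ! i \<in> P \<union> Q) \<and>
     (\<forall>i. Suc i < length ws \<longrightarrow>
        (ws ! i \<in> P \<and> ws ! Suc i \<in> Q) \<or> (ws ! i \<in> Q \<and> ws ! Suc i \<in> P))"

definition amalgam_decomposition ::
  "('g, 'b) monoid_scheme \<Rightarrow> 'g set \<Rightarrow> 'g set \<Rightarrow> 'g set \<Rightarrow> bool" where
  "amalgam_decomposition G A B C \<longleftrightarrow>
     subgroup A G \<and> subgroup B G \<and> C = A \<inter> B \<and>
     generate G (A \<union> B) = carrier G \<and>
     (\<forall>ws. ws \<noteq> [] \<longrightarrow> alternating (A - C) (B - C) ws \<longrightarrow>
        foldr (\<otimes>\<^bsub>G\<^esub>) ws \<one>\<^bsub>G\<^esub> \<noteq> \<one>\<^bsub>G\<^esub>)"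

definition S4_D4_Dn_amalgam ::
  "nat \<Rightarrow> ('g, 'b) monoid_scheme \<Rightarrow> 'g set \<Rightarrow> 'g set \<Rightarrow> 'g set \<Rightarrow> bool" where
  "S4_D4_Dn_amalgam n G A B C \<longleftrightarrow>
     amalgam_decomposition G A B C \<and>
     G\<lparr>carrier := A\<rparr> \<cong> sym_group 4 \<and>
     G\<lparr>carrier := B\<rparr> \<cong> dihedral_group n \<and>
     G\<lparr>carrier := C\<rparr> \<cong> dihedral_group 4"

text \<open>Vertices V, edges E, origin map org, edge reversal rv (fixed-point-free involution);
  the terminus of e is org (rv e).\<close>
definition serre_graph :: "'v set \<Rightarrow> 'e set \<Rightarrow> ('e \<Rightarrow> 'v) \<Rightarrow> ('e \<Rightarrow> 'e) \<Rightarrow> bool" where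
  "serre_graph V E org rv \<longleftrightarrow>
     (\<forall>e \<in> E. org e \<in> V \<and> rv e \<in> E \<and> rv (rv e) = e \<and> rv e \<noteq> e)"

definition is_path :: "'e set \<Rightarrow> ('e \<Rightarrow> 'v) \<Rightarrow> ('e \<Rightarrow> 'e) \<Rightarrow> 'e list \<Rightarrow> bool" where
  "is_path E org rv es \<longleftrightarrow> set es \<subseteq> E \<and>
     (\<forall>i. Suc i < length es \<longrightarrow> org (rv (es ! i)) = org (es ! Suc i))"

definition reduced_path :: "'e set \<Rightarrow> ('e \<Rightarrow> 'v) \<Rightarrow> ('e \<Rightarrow> 'e) \<Rightarrow> 'e list \<Rightarrow> bool" where
  "reduced_path E org rv es \<longleftrightarrow> is_path E org rv es \<and>
     (\<forall>i. Suc i < length es \<longrightarrow> es ! Suc i \<noteq> rv (es ! i))"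

definition connected_graph :: "'v set \<Rightarrow> 'e set \<Rightarrow> ('e \<Rightarrow> 'v) \<Rightarrow> ('e \<Rightarrow> 'e) \<Rightarrow> bool" where
  "connected_graph V E org rv \<longleftrightarrow> V \<noteq> {} \<and>
     (\<forall>P \<in> V. \<forall>Q \<in> V. P = Q \<or> (\<exists>es. es \<noteq> [] \<and> is_path E org rv es \<and>
        org (hd es) = P \<and> org (rv (last es)) = Q))"

definition is_tree :: "'v set \<Rightarrow> 'e set \<Rightarrow> ('e \<Rightarrow> 'v) \<Rightarrow> ('e \<Rightarrow> 'e) \<Rightarrow> bool" where
  "is_tree V E org rv \<longleftrightarrow> serre_graph V E org rv \<and> connected_graph V E org rv \<and>
     \<not> (\<exists>es. es \<noteq> [] \<and> reduced_path E org rv es \<and> org (rv (last es)) = org (hd es))"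

definition valence :: "'e set \<Rightarrow> ('e \<Rightarrow> 'v) \<Rightarrow> 'v \<Rightarrow> nat" where
  "valence E org v = card {e \<in> E. org e = v}"

definition terminal_vertex :: "'e set \<Rightarrow> ('e \<Rightarrow> 'v) \<Rightarrow> 'v \<Rightarrow> bool" where
  "terminal_vertex E org v \<longleftrightarrow> finite {e \<in> E. org e = v} \<and> valence E org v = 1"

definition graph_action ::
  "('g, 'b) monoid_scheme \<Rightarrow> 'v set \<Rightarrow> 'e set \<Rightarrow> ('e \<Rightarrow> 'v) \<Rightarrow> ('e \<Rightarrow> 'e)
     \<Rightarrow> ('g \<Rightarrow> 'v \<Rightarrow> 'v) \<Rightarrow> ('g \<Rightarrow> 'e \<Rightarrow> 'e) \<Rightarrow> bool" where
  "graph_action G V E org rv \<phi>V \<phi>E \<longleftrightarrow>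
     group_action G V \<phi>V \<and> group_action G E \<phi>E \<and>
     (\<forall>g \<in> carrier G. \<forall>e \<in> E. \<phi>V g (org e) = org (\<phi>E g e) \<and> \<phi>E g (rv e) = rv (\<phi>E g e))"

end

theory Submission
  imports Defs
begin


lemma is_path_Nil[simp]: "is_path E org rv []"
  by (simp add: is_path_def)

lemma is_path_Cons: "is_path E org rv (e # es) \<longleftrightarrow>
   e \<in> E \<and> is_path E org rv es \<and> (es \<noteq> [] \<longrightarrow> org (rv e) = org (hd es))"
proof -
  have "(\<forall>i. Suc i < length (e # es) \<longrightarrow> org (rv ((e # es) ! i)) = org ((e # es) ! Suc i))
     \<longleftrightarrow> (es \<noteq> [] \<longrightarrow> org (rv e) = org (hd es)) \<and>
         (\<forall>i. Suc i < length es \<longrightarrow> org (rv (es ! i)) = org (es ! Suc i))" (is "?L = ?R")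
  proof
    assume L: ?L
    show ?R
    proof (intro conjI allI impI)
      assume "es \<noteq> []" thus "org (rv e) = org (hd es)" using L[rule_format, of 0] by (simp add: hd_conv_nth)
    next
      fix i assume "Suc i < length es" thus "org (rv (es ! i)) = org (es ! Suc i)" using L[rule_format, of "Suc i"] by simp
    qed
  next
    assume R: ?R
    show ?L
    proof (intro allI impI)
      fix i assume i: "Suc i < length (e # es)"
      show "org (rv ((e # es) ! i)) = org ((e # es) ! Suc i)"
      proof (cases i)
        case 0 thus ?thesis using R i by (auto simp: hd_conv_nth)
      next
        case (Suc j) thus ?thesis using R i by auto
      qed
    qed
  qed
  thus ?thesis unfolding is_path_def by auto
qed

lemma reduced_path_Nil[simp]: "reduced_path E org rv []"
  by (simp add: reduced_path_def)

lemma reduced_path_Cons: "reduced_path E org rv (e # es) \<longleftrightarrow>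
   is_path E org rv (e # es) \<and> reduced_path E org rv es \<and> (es \<noteq> [] \<longrightarrow> hd es \<noteq> rv e)"
proof -
  have "(\<forall>i. Suc i < length (e # es) \<longrightarrow> (e # es) ! Suc i \<noteq> rv ((e # es) ! i))
     \<longleftrightarrow> (es \<noteq> [] \<longrightarrow> hd es \<noteq> rv e) \<and>
         (\<forall>i. Suc i < length es \<longrightarrow> es ! Suc i \<noteq> rv (es ! i))" (is "?L = ?R")
  proof
    assume L: ?L
    show ?R
    proof (intro conjI allI impI)
      assume "es \<noteq> []" thus "hd es \<noteq> rv e" using L[rule_format, of 0] by (simp add: hd_conv_nth)
    next
      fix i assume "Suc i < length es" thus "es ! Suc i \<noteq> rv (es ! i)" using L[rule_format, of "Suc i"] by simp
    qed
  next
    assume R: ?R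
    show ?L
    proof (intro allI impI)
      fix i assume i: "Suc i < length (e # es)"
      show "(e # es) ! Suc i \<noteq> rv ((e # es) ! i)"
      proof (cases i)
        case 0 thus ?thesis using R i by (auto simp: hd_conv_nth)
      next
        case (Suc j) thus ?thesis using R i by auto
      qed
    qed
  qed
  thus ?thesis unfolding reduced_path_def is_path_Cons by auto
qed

fun rp :: "'v set \<Rightarrow> 'e set \<Rightarrow> ('e \<Rightarrow> 'v) \<Rightarrow> ('e \<Rightarrow> 'e) \<Rightarrow> 'v \<Rightarrow> 'e list \<Rightarrow> 'v \<Rightarrow> bool" where
  "rp V E org rv x [] y \<longleftrightarrow> x = y \<and> x \<in> V"
| "rp V E org rv x (e # es) y \<longleftrightarrow> e \<in> E \<and> org e = x \<and> x \<in> V \<and> rp V E org rv (org (rv e)) es y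
     \<and> (es \<noteq> [] \<longrightarrow> hd es \<noteq> rv e)"

fun pth :: "'v set \<Rightarrow> 'e set \<Rightarrow> ('e \<Rightarrow> 'v) \<Rightarrow> ('e \<Rightarrow> 'e) \<Rightarrow> 'v \<Rightarrow> 'e list \<Rightarrow> 'v \<Rightarrow> bool" where
  "pth V E org rv x [] y \<longleftrightarrow> x = y \<and> x \<in> V"
| "pth V E org rv x (e # es) y \<longleftrightarrow> e \<in> E \<and> org e = x \<and> x \<in> V \<and> pth V E org rv (org (rv e)) es y"

locale sgraph =
  fixes V :: "'v set" and E :: "'e set" and org :: "'e \<Rightarrow> 'v" and rv :: "'e \<Rightarrow> 'e"
  assumes sg: "serre_graph V E org rv"
begin

abbreviation "RP \<equiv> rp V E org rv"
abbreviation "PT \<equiv> pth V E org rv"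

lemma E_org: "e \<in> E \<Longrightarrow> org e \<in> V" using sg unfolding serre_graph_def by auto
lemma E_rv: "e \<in> E \<Longrightarrow> rv e \<in> E" using sg unfolding serre_graph_def by auto
lemma rv_rv[simp]: "e \<in> E \<Longrightarrow> rv (rv e) = e" using sg unfolding serre_graph_def by auto
lemma rv_neq: "e \<in> E \<Longrightarrow> rv e \<noteq> e" using sg unfolding serre_graph_def by auto
lemma E_trm: "e \<in> E \<Longrightarrow> org (rv e) \<in> V" using E_org E_rv by blast

lemma rp_V: "RP x r y \<Longrightarrow> x \<in> V \<and> y \<in> V"
  by (induction r arbitrary: x) auto

lemma rp_E: "RP x r y \<Longrightarrow> set r \<subseteq> E"
  by (induction r arbitrary: x) auto

lemma rp_end_unique: "RP x r y \<Longrightarrow> RP x r y' \<Longrightarrow> y = y'"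
  by (induction r arbitrary: x) auto

lemma rp_append: "RP x r1 y \<Longrightarrow> RP y r2 z \<Longrightarrow> (r1 \<noteq> [] \<longrightarrow> r2 \<noteq> [] \<longrightarrow> hd r2 \<noteq> rv (last r1))
   \<Longrightarrow> RP x (r1 @ r2) z"
proof (induction r1 arbitrary: x)
  case Nil thus ?case by simp
next
  case (Cons e r1)
  have e: "e \<in> E" "org e = x" "x \<in> V" "RP (org (rv e)) r1 y" "r1 \<noteq> [] \<longrightarrow> hd r1 \<noteq> rv e"
    using Cons.prems(1) by simp_all
  have j: "r1 \<noteq> [] \<longrightarrow> r2 \<noteq> [] \<longrightarrow> hd r2 \<noteq> rv (last r1)"
    using Cons.prems(3) by (cases r1) simp_all
  have "RP (org (rv e)) (r1 @ r2) z" using Cons.IH[OF e(4) Cons.prems(2) j] .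
  moreover have "r1 @ r2 \<noteq> [] \<longrightarrow> hd (r1 @ r2) \<noteq> rv e"
  proof (cases r1)
    case Nil
    hence "y = org (rv e)" using e(4) by simp
    thus ?thesis using Nil Cons.prems(3) by simp
  next
    case (Cons f r1') thus ?thesis using e(5) by simp
  qed
  ultimately show ?case using e(1-3) by simp
qed

lemma rp_appendD: "RP x (r1 @ r2) z \<Longrightarrow> \<exists>y. RP x r1 y \<and> RP y r2 z"
proof (induction r1 arbitrary: x)
  case Nil thus ?case using rp_V by auto
next
  case (Cons e r1)
  then obtain y where "RP (org (rv e)) r1 y" "RP y r2 z" by auto
  thus ?case using Cons.prems by (cases r1) auto
qed

lemma rp_snoc: "RP x r y \<Longrightarrow> e \<in> E \<Longrightarrow> org e = y \<Longrightarrow> (r \<noteq> [] \<longrightarrow> e \<noteq> rv (last r))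
   \<Longrightarrow> RP x (r @ [e]) (org (rv e))"
proof -
  assume a: "RP x r y" "e \<in> E" "org e = y" "r \<noteq> [] \<longrightarrow> e \<noteq> rv (last r)"
  have "y \<in> V" using rp_V[OF a(1)] by simp
  hence "RP y [e] (org (rv e))" using a E_trm by simp
  thus ?thesis using rp_append[OF a(1)] a(4) by simp
qed

lemma rp_rev: "RP x r y \<Longrightarrow> RP y (rev (map rv r)) x"
proof (induction r arbitrary: x)
  case Nil thus ?case by auto
next
  case (Cons e r)
  have e: "e \<in> E" "org e = x" "x \<in> V" "RP (org (rv e)) r y" "r \<noteq> [] \<longrightarrow> hd r \<noteq> rv e"
    using Cons.prems(1) by simp_all
  have a: "RP y (rev (map rv r)) (org (rv e))" using Cons.IH[OF e(4)] .
  have b: "rev (map rv r) \<noteq> [] \<longrightarrow> rv e \<noteq> rv (last (rev (map rv r)))"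
  proof (cases r)
    case Nil thus ?thesis by simp
  next
    case (Cons f r')
    have "f \<in> E" using e(4) Cons by simp
    hence "rv (rv f) = f" by simp
    thus ?thesis using e(5) Cons by (auto simp: last_rev)
  qed
  have "RP y (rev (map rv r) @ [rv e]) (org (rv (rv e)))"
    using rp_snoc[OF a E_rv[OF e(1)] refl b] .
  thus ?case using e by simp
qed

lemma reduced_is_path: "reduced_path E org rv r \<Longrightarrow> is_path E org rv r"
  by (simp add: reduced_path_def)

lemma rp_Cons_iff_reduced: "r \<noteq> [] \<Longrightarrow> RP x r y \<longleftrightarrow>
   reduced_path E org rv r \<and> org (hd r) = x \<and> org (rv (last r)) = y"
proof (induction r arbitrary: x)
  case Nil thus ?case by simp
next
  case (Cons e r)
  show ?case
  proof (cases r)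
    case Nil
    have "RP x [e] y \<longleftrightarrow> e \<in> E \<and> org e = x \<and> org (rv e) = y"
      using E_org E_trm by auto
    moreover have "reduced_path E org rv [e] \<longleftrightarrow> e \<in> E"
      by (simp add: reduced_path_Cons is_path_Cons)
    ultimately show ?thesis using Nil by simp
  next
    case (Cons f r')
    have IH: "RP (org (rv e)) r y \<longleftrightarrow> reduced_path E org rv r \<and> org (hd r) = org (rv e) \<and> org (rv (last r)) = y"
      using Cons.IH Cons by simp
    have L: "RP x (e # r) y \<longleftrightarrow> e \<in> E \<and> org e = x \<and> x \<in> V \<and> RP (org (rv e)) r y \<and> hd r \<noteq> rv e"
      using Cons by simp
    have R: "reduced_path E org rv (e # r) \<longleftrightarrow> e \<in> E \<and> is_path E org rv r \<and> org (rv e) = org (hd r)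
        \<and> reduced_path E org rv r \<and> hd r \<noteq> rv e"
      using Cons by (simp add: reduced_path_Cons is_path_Cons)
    show ?thesis unfolding L R IH using Cons reduced_is_path E_org by auto
  qed
qed

lemma pth_Cons_iff_path: "r \<noteq> [] \<Longrightarrow> PT x r y \<longleftrightarrow>
   is_path E org rv r \<and> org (hd r) = x \<and> org (rv (last r)) = y"
proof (induction r arbitrary: x)
  case Nil thus ?case by simp
next
  case (Cons e r)
  show ?case
  proof (cases r)
    case Nil
    have "PT x [e] y \<longleftrightarrow> e \<in> E \<and> org e = x \<and> org (rv e) = y"
      using E_org E_trm by auto
    moreover have "is_path E org rv [e] \<longleftrightarrow> e \<in> E"
      by (simp add: is_path_Cons)
    ultimately show ?thesis using Nil by simp
  next
    case (Cons f r')
    have IH: "PT (org (rv e)) r y \<longleftrightarrow> is_path E org rv r \<and> org (hd r) = org (rv e) \<and> org (rv (last r)) = y"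
      using Cons.IH Cons by simp
    have L: "PT x (e # r) y \<longleftrightarrow> e \<in> E \<and> org e = x \<and> x \<in> V \<and> PT (org (rv e)) r y"
      by simp
    have R: "is_path E org rv (e # r) \<longleftrightarrow> e \<in> E \<and> is_path E org rv r \<and> org (rv e) = org (hd r)"
      using Cons by (simp add: is_path_Cons)
    show ?thesis unfolding L R IH using Cons E_org by auto
  qed
qed

lemma pth_rp: "PT x r y \<Longrightarrow> \<exists>r'. RP x r' y"
proof (induction r arbitrary: x)
  case Nil thus ?case by (intro exI[of _ "[]"]) auto
next
  case (Cons e r)
  have e: "e \<in> E" "org e = x" "x \<in> V" "PT (org (rv e)) r y" using Cons.prems by simp_all
  then obtain r' where r': "RP (org (rv e)) r' y" using Cons.IH by blast
  show ?case
  proof (cases "r' \<noteq> [] \<and> hd r' = rv e")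
    case True
    then obtain r'' where r'': "r' = rv e # r''" by (cases r') auto
    have "RP (org (rv (rv e))) r'' y" using r' r'' by simp
    thus ?thesis using e(1,2) by (intro exI[of _ r'']) simp
  next
    case False
    have "RP x (e # r') y" using e r' False by auto
    thus ?thesis by blast
  qed
qed

end

locale stree = sgraph +
  assumes tree: "is_tree V E org rv"
begin

lemma rp_exists: "x \<in> V \<Longrightarrow> y \<in> V \<Longrightarrow> \<exists>r. RP x r y"
proof -
  assume x: "x \<in> V" and y: "y \<in> V"
  show ?thesis
  proof (cases "x = y")
    case True thus ?thesis using x by (intro exI[of _ "[]"]) auto
  next
    case False
    then obtain es where "es \<noteq> []" "is_path E org rv es" "org (hd es) = x" "org (rv (last es)) = y"
      using tree x y unfolding is_tree_def connected_graph_def by blast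
    hence "PT x es y" using pth_Cons_iff_path by blast
    thus ?thesis using pth_rp by blast
  qed
qed

lemma no_cycle: "RP x r x \<Longrightarrow> r = []"
proof (rule ccontr)
  assume "RP x r x" "r \<noteq> []"
  hence "reduced_path E org rv r" "org (rv (last r)) = org (hd r)" using rp_Cons_iff_reduced by auto
  thus False using tree \<open>r \<noteq> []\<close> unfolding is_tree_def by blast
qed

lemma rp_unique: "RP x r1 y \<Longrightarrow> RP x r2 y \<Longrightarrow> r1 = r2"
proof (induction r1 arbitrary: x r2)
  case Nil
  hence "RP x (rev (map rv r2)) x" using rp_rev by auto
  thus ?case using no_cycle Nil by auto
next
  case (Cons e r1)
  show ?case
  proof (cases r2)
    case Nil
    hence "x = y" using Cons.prems(2) by simp
    hence "RP x (rev (map rv (e # r1))) x" using rp_rev[OF Cons.prems(1)] by simp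
    hence "rev (map rv (e # r1)) = []" by (rule no_cycle)
    thus ?thesis by simp
  next
    case (Cons f r2')
    show ?thesis
    proof (cases "e = f")
      case True
      thus ?thesis using Cons.prems Cons.IH[of "org (rv e)" r2'] \<open>r2 = f # r2'\<close> by auto
    next
      case False
      have a: "RP y (rev (map rv r2)) x" using rp_rev Cons.prems by auto
      have fE: "f \<in> E" using Cons.prems(2) \<open>r2 = f # r2'\<close> by simp
      have l: "last (rev (map rv r2)) = rv f" using \<open>r2 = f # r2'\<close> by (simp add: last_rev)
      have "RP y (rev (map rv r2) @ (e # r1)) y"
        using rp_append[OF a Cons.prems(1)] l fE False by simp
      hence "rev (map rv r2) @ (e # r1) = []" by (rule no_cycle)
      thus ?thesis by simp
    qed
  qed
qed

definition geo where
  "geo x y = (THE r. RP x r y)"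

definition dist where
  "dist x y = length (geo x y)"

lemma geo_eq: "RP x r y \<Longrightarrow> geo x y = r"
  unfolding geo_def using rp_unique by blast

lemma geo: "x \<in> V \<Longrightarrow> y \<in> V \<Longrightarrow> RP x (geo x y) y"
  using rp_exists geo_eq by metis

lemma dist_eq: "RP x r y \<Longrightarrow> dist x y = length r"
  using geo_eq dist_def by auto

lemma dist_sym: "x \<in> V \<Longrightarrow> y \<in> V \<Longrightarrow> dist x y = dist y x"
  using geo[of x y] rp_rev dist_eq by (metis length_map length_rev)

lemma dist_0: "x \<in> V \<Longrightarrow> dist x x = 0"
  using dist_eq[of x "[]" x] by simp

lemma dist_0_iff: "x \<in> V \<Longrightarrow> y \<in> V \<Longrightarrow> dist x y = 0 \<longleftrightarrow> x = y"
  using geo[of x y] dist_eq dist_0 by (metis length_0_conv rp.simps(1))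

end


context stree begin

lemma rp_Nil_iff[simp]: "RP x [] y \<longleftrightarrow> x = y \<and> x \<in> V" by simp

lemma dist_le_1_geo: "x \<in> V \<Longrightarrow> y \<in> V \<Longrightarrow> dist x y = 1 \<Longrightarrow> \<exists>e. geo x y = [e]"
  unfolding dist_def by (cases "geo x y") auto

lemma center_step:
  assumes m1: "m1 \<in> V" and m2: "m2 \<in> V" and g: "geo m1 m2 = g1 # rest" and d: "dist m1 m2 \<ge> 2"
    and s: "s \<in> V"
  shows "org (rv g1) \<in> V" "dist (org (rv g1)) s < max (dist m1 s) (dist m2 s)"
proof -
  have P: "RP m1 (g1 # rest) m2" using geo[OF m1 m2] g by simp
  hence g1: "g1 \<in> E" "org g1 = m1" and Pr: "RP (org (rv g1)) rest m2" and hr: "rest \<noteq> [] \<longrightarrow> hd rest \<noteq> rv g1"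
    by simp_all
  show mV: "org (rv g1) \<in> V" using E_trm g1 by simp
  have rne: "rest \<noteq> []" using d g unfolding dist_def by auto
  define q where "q = geo m1 s"
  have Q: "RP m1 q s" using geo[OF m1 s] q_def by simp
  show "dist (org (rv g1)) s < max (dist m1 s) (dist m2 s)"
  proof (cases "q \<noteq> [] \<and> hd q = g1")
    case True
    then obtain q' where q': "q = g1 # q'" by (cases q) auto
    have "RP (org (rv g1)) q' s" using Q q' by simp
    hence "dist (org (rv g1)) s = length q'" by (rule dist_eq)
    moreover have "dist m1 s = length q" using Q by (rule dist_eq)
    ultimately show ?thesis using q' by simp
  next
    case False
    have R: "RP m2 (rev (map rv (g1 # rest))) m1" using rp_rev[OF P] .
    have l: "last (rev (map rv (g1 # rest))) = rv g1" by (simp add: last_rev)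
    have "RP m2 (rev (map rv (g1 # rest)) @ q) s"
      using rp_append[OF R Q] l False g1 by auto
    hence d2: "dist m2 s = length rest + 1 + length q" using dist_eq by fastforce
    have R1: "RP (org (rv g1)) [rv g1] m1" using g1 E_rv E_trm m1 by simp
    have "RP (org (rv g1)) ([rv g1] @ q) s"
      using rp_append[OF R1 Q] False g1 by auto
    hence "dist (org (rv g1)) s = 1 + length q" using dist_eq by fastforce
    moreover have "length rest \<ge> 1" using rne by (cases rest) auto
    ultimately show ?thesis using d2 by simp
  qed
qed

lemma no_triangle:
  assumes "x \<in> V" "y \<in> V" "z \<in> V" "dist x y = 1" "dist y z = 1" "x \<noteq> z"
  shows "dist x z = 2"
proof -
  obtain e where e: "geo x y = [e]" using dist_le_1_geo assms by blast
  obtain f where f: "geo y z = [f]" using dist_le_1_geo assms by blast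
  have P1: "RP x [e] y" using geo[of x y] e assms by simp
  have P2: "RP y [f] z" using geo[of y z] f assms by simp
  have "f \<noteq> rv e"
  proof
    assume "f = rv e"
    hence "z = org (rv (rv e))" using P2 by simp
    also have "\<dots> = x" using P1 by simp
    finally show False using assms by simp
  qed
  hence "RP x ([e] @ [f]) z" using rp_append[OF P1 P2] assms(3) by simp
  thus ?thesis using dist_eq by fastforce
qed

end

locale tact = stree +
  fixes G (structure) and \<phi>V and \<phi>E
  assumes grp: "group G"
    and actV: "\<And>g x. g \<in> carrier G \<Longrightarrow> x \<in> V \<Longrightarrow> \<phi>V g x \<in> V"
    and actE: "\<And>g e. g \<in> carrier G \<Longrightarrow> e \<in> E \<Longrightarrow> \<phi>E g e \<in> E"
    and mulV: "\<And>g h x. g \<in> carrier G \<Longrightarrow> h \<in> carrier G \<Longrightarrow> x \<in> V \<Longrightarrow> \<phi>V (g \<otimes> h) x = \<phi>V g (\<phi>V h x)"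
    and mulE: "\<And>g h e. g \<in> carrier G \<Longrightarrow> h \<in> carrier G \<Longrightarrow> e \<in> E \<Longrightarrow> \<phi>E (g \<otimes> h) e = \<phi>E g (\<phi>E h e)"
    and oneV: "\<And>x. x \<in> V \<Longrightarrow> \<phi>V \<one> x = x"
    and oneE: "\<And>e. e \<in> E \<Longrightarrow> \<phi>E \<one> e = e"
    and orgc: "\<And>g e. g \<in> carrier G \<Longrightarrow> e \<in> E \<Longrightarrow> \<phi>V g (org e) = org (\<phi>E g e)"
    and rvc: "\<And>g e. g \<in> carrier G \<Longrightarrow> e \<in> E \<Longrightarrow> \<phi>E g (rv e) = rv (\<phi>E g e)"
begin

sublocale grp: group G by (rule grp)

lemma invV: "g \<in> carrier G \<Longrightarrow> x \<in> V \<Longrightarrow> \<phi>V (inv g) (\<phi>V g x) = x"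
  using mulV[of "inv g" g x] oneV[of x] by (simp add: grp.l_inv grp.inv_closed)

lemma invE: "g \<in> carrier G \<Longrightarrow> e \<in> E \<Longrightarrow> \<phi>E (inv g) (\<phi>E g e) = e"
  using mulE[of "inv g" g e] oneE[of e] by (simp add: grp.l_inv grp.inv_closed)

lemma invV': "g \<in> carrier G \<Longrightarrow> x \<in> V \<Longrightarrow> \<phi>V g (\<phi>V (inv g) x) = x"
  using mulV[of g "inv g" x] oneV[of x] by (simp add: grp.r_inv grp.inv_closed)

lemma injV: "g \<in> carrier G \<Longrightarrow> x \<in> V \<Longrightarrow> y \<in> V \<Longrightarrow> \<phi>V g x = \<phi>V g y \<Longrightarrow> x = y"
proof -
  assume a: "g \<in> carrier G" "x \<in> V" "y \<in> V" "\<phi>V g x = \<phi>V g y"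
  have "x = \<phi>V (inv g) (\<phi>V g x)" using invV[OF a(1) a(2)] by simp
  also have "\<dots> = y" using a(4) invV[OF a(1) a(3)] by simp
  finally show ?thesis .
qed

lemma injE: "g \<in> carrier G \<Longrightarrow> e \<in> E \<Longrightarrow> f \<in> E \<Longrightarrow> \<phi>E g e = \<phi>E g f \<Longrightarrow> e = f"
proof -
  assume a: "g \<in> carrier G" "e \<in> E" "f \<in> E" "\<phi>E g e = \<phi>E g f"
  have "e = \<phi>E (inv g) (\<phi>E g e)" using invE[OF a(1) a(2)] by simp
  also have "\<dots> = f" using a(4) invE[OF a(1) a(3)] by simp
  finally show ?thesis .
qed

lemma rp_act: "RP x r y \<Longrightarrow> g \<in> carrier G \<Longrightarrow> RP (\<phi>V g x) (map (\<phi>E g) r) (\<phi>V g y)"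
proof (induction r arbitrary: x)
  case Nil thus ?case using actV by auto
next
  case (Cons e r)
  have e: "e \<in> E" "org e = x" "x \<in> V" "RP (org (rv e)) r y" "r \<noteq> [] \<longrightarrow> hd r \<noteq> rv e"
    using Cons.prems(1) by simp_all
  have IH: "RP (\<phi>V g (org (rv e))) (map (\<phi>E g) r) (\<phi>V g y)" using Cons.IH[OF e(4) Cons.prems(2)] .
  have a: "\<phi>V g (org (rv e)) = org (rv (\<phi>E g e))" using orgc rvc Cons.prems(2) e(1) E_rv by simp
  have b: "r \<noteq> [] \<longrightarrow> hd (map (\<phi>E g) r) \<noteq> rv (\<phi>E g e)"
  proof
    assume "r \<noteq> []"
    then obtain f r' where r: "r = f # r'" by (cases r) auto
    have fE: "f \<in> E" using e(4) r by simp
    have "f \<noteq> rv e" using e(5) r by simp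
    hence "\<phi>E g f \<noteq> \<phi>E g (rv e)" using injE[OF Cons.prems(2) fE E_rv[OF e(1)]] by blast
    thus "hd (map (\<phi>E g) r) \<noteq> rv (\<phi>E g e)" using rvc[OF Cons.prems(2) e(1)] r by simp
  qed
  show ?case using IH a b e actE[OF Cons.prems(2) e(1)] actV[OF Cons.prems(2) e(3)] orgc[OF Cons.prems(2) e(1)]
    by simp
qed

lemma geo_act: "x \<in> V \<Longrightarrow> y \<in> V \<Longrightarrow> g \<in> carrier G \<Longrightarrow> geo (\<phi>V g x) (\<phi>V g y) = map (\<phi>E g) (geo x y)"
proof -
  assume a: "x \<in> V" "y \<in> V" "g \<in> carrier G"
  show ?thesis using geo_eq[OF rp_act[OF geo[OF a(1,2)] a(3)]] .
qed

lemma dist_act: "x \<in> V \<Longrightarrow> y \<in> V \<Longrightarrow> g \<in> carrier G \<Longrightarrow> dist (\<phi>V g x) (\<phi>V g y) = dist x y"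
  using geo_act unfolding dist_def by simp

end

locale tact_fp = tact +
  fixes H
  assumes H: "subgroup H G" and Hfin: "finite H"
    and noinv: "\<And>g e. g \<in> carrier G \<Longrightarrow> e \<in> E \<Longrightarrow> \<phi>E g e \<noteq> rv e"
begin

lemma V_ne: "V \<noteq> {}"
proof -
  have "connected_graph V E org rv" using tree unfolding is_tree_def by simp
  thus ?thesis unfolding connected_graph_def by simp
qed

lemma H_car: "h \<in> H \<Longrightarrow> h \<in> carrier G" by (rule subgroup.mem_carrier[OF H])

theorem fixed_point: "\<exists>x\<in>V. \<forall>h\<in>H. \<phi>V h x = x"
proof -
  obtain x0 where x0: "x0 \<in> V" using V_ne by blast
  define S where "S = (\<lambda>h. \<phi>V h x0) ` H"
  have Sfin: "finite S" using Hfin S_def by simp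
  have Sne: "S \<noteq> {}" using S_def subgroup.one_closed[OF H] by blast
  have SV: "S \<subseteq> V" using S_def actV H_car x0 by blast
  have hS: "\<And>h. h \<in> H \<Longrightarrow> (\<phi>V h) ` S = S"
  proof -
    fix h assume h: "h \<in> H"
    show "(\<phi>V h) ` S = S"
    proof
      show "\<phi>V h ` S \<subseteq> S"
      proof
        fix t assume "t \<in> \<phi>V h ` S"
        then obtain h' where h': "h' \<in> H" "t = \<phi>V h (\<phi>V h' x0)" unfolding S_def by blast
        have "t = \<phi>V (h \<otimes> h') x0" using mulV H_car h h' x0 by simp
        moreover have "h \<otimes> h' \<in> H" using subgroup.m_closed[OF H] h h' by blast
        ultimately show "t \<in> S" unfolding S_def by blast
      qed
    next
      show "S \<subseteq> \<phi>V h ` S"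
      proof
        fix s assume "s \<in> S"
        then obtain h' where h': "h' \<in> H" "s = \<phi>V h' x0" unfolding S_def by blast
        have ih: "inv h \<otimes> h' \<in> H" using h h' subgroup.m_closed[OF H] subgroup.m_inv_closed[OF H] by blast
        have "\<phi>V h (\<phi>V (inv h \<otimes> h') x0) = \<phi>V (h \<otimes> (inv h \<otimes> h')) x0"
          using mulV H_car h ih x0 by simp
        also have "h \<otimes> (inv h \<otimes> h') = h'" using H_car h h'
          by (simp add: grp.m_assoc[symmetric] grp.r_inv)
        finally have "s = \<phi>V h (\<phi>V (inv h \<otimes> h') x0)" using h' by simp
        moreover have "\<phi>V (inv h \<otimes> h') x0 \<in> S" using ih unfolding S_def by blast
        ultimately show "s \<in> \<phi>V h ` S" by blast
      qed
    qed
  qed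
  define r where "r m = Max ((\<lambda>s. dist m s) ` S)" for m
  have r_inv: "r (\<phi>V h m) = r m" if h: "h \<in> H" and m: "m \<in> V" for h m
  proof -
    have "(\<lambda>s. dist (\<phi>V h m) s) ` S = (\<lambda>s. dist (\<phi>V h m) s) ` (\<phi>V h ` S)" using hS[OF h] by simp
    also have "\<dots> = (\<lambda>s. dist (\<phi>V h m) (\<phi>V h s)) ` S" by (simp add: image_image)
    also have "\<dots> = (\<lambda>s. dist m s) ` S" using dist_act m SV H_car[OF h] by (intro image_cong) auto
    finally show ?thesis unfolding r_def by simp
  qed
  have r_ge: "dist m s \<le> r m" if "s \<in> S" for m s
    unfolding r_def using Sfin that by (intro Max_ge) auto
  have r_attained: "\<exists>s\<in>S. r m = dist m s" for m
  proof -
    have "Max ((\<lambda>s. dist m s) ` S) \<in> (\<lambda>s. dist m s) ` S" using Sfin Sne by (intro Max_in) auto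
    thus ?thesis unfolding r_def by auto
  qed
  define rmin where "rmin = (LEAST k. \<exists>m\<in>V. r m = k)"
  have rmin_ex: "\<exists>m\<in>V. r m = rmin"
  proof -
    have "\<exists>k. \<exists>m\<in>V. r m = k" using x0 by blast
    from LeastI_ex[OF this] show ?thesis unfolding rmin_def .
  qed
  have rmin_le: "m \<in> V \<Longrightarrow> rmin \<le> r m" for m unfolding rmin_def by (rule Least_le) blast
  define S' where "S' = {m\<in>V. r m = rmin}"
  have S'inv: "\<phi>V h m \<in> S'" if "h \<in> H" "m \<in> S'" for h m
    using that r_inv actV H_car unfolding S'_def by auto
  have S'dist: "dist m1 m2 \<le> 1" if m1: "m1 \<in> S'" and m2: "m2 \<in> S'" for m1 m2
  proof (rule ccontr)
    assume "\<not> dist m1 m2 \<le> 1"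
    hence d: "dist m1 m2 \<ge> 2" by simp
    have V1: "m1 \<in> V" and V2: "m2 \<in> V" using m1 m2 S'_def by auto
    obtain g1 rest where g: "geo m1 m2 = g1 # rest" using d unfolding dist_def by (cases "geo m1 m2") auto
    define m where "m = org (rv g1)"
    have mV: "m \<in> V" using center_step(1)[OF V1 V2 g d x0] m_def by simp
    obtain s where s: "s \<in> S" "r m = dist m s" using r_attained by blast
    have "dist m s < max (dist m1 s) (dist m2 s)" using center_step(2)[OF V1 V2 g d] s SV m_def by blast
    also have "\<dots> \<le> rmin"
    proof -
      have "r m1 = rmin" "r m2 = rmin" using m1 m2 unfolding S'_def by auto
      thus ?thesis using r_ge[OF s(1), of m1] r_ge[OF s(1), of m2] by simp
    qed
    finally have "r m < rmin" using s by simp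
    thus False using rmin_le[OF mV] by simp
  qed
  obtain m1 where m1: "m1 \<in> S'" using rmin_ex S'_def by blast
  have m1V: "m1 \<in> V" using m1 S'_def by simp
  show ?thesis
  proof (cases "\<forall>h\<in>H. \<phi>V h m1 = m1")
    case True thus ?thesis using m1V by blast
  next
    case False
    then obtain h where h: "h \<in> H" "\<phi>V h m1 \<noteq> m1" by blast
    define m2 where "m2 = \<phi>V h m1"
    have m2: "m2 \<in> S'" using S'inv h m1 m2_def by simp
    have m2V: "m2 \<in> V" using m2 S'_def by simp
    have hc: "h \<in> carrier G" using H_car h by simp
    have d12: "dist m1 m2 = 1" using S'dist[OF m1 m2] dist_0_iff[OF m1V m2V] h m2_def by simp
    define m3 where "m3 = \<phi>V h m2"
    have m3: "m3 \<in> S'" using S'inv h m2 m3_def by simp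
    have m3V: "m3 \<in> V" using m3 S'_def by simp
    have m32: "m3 \<noteq> m2" using injV[OF hc m2V m1V] h m2_def m3_def by auto
    have m31: "m3 = m1"
    proof (rule ccontr)
      assume ne: "m3 \<noteq> m1"
      have d23: "dist m2 m3 = 1" using S'dist[OF m2 m3] dist_0_iff[OF m2V m3V] m32 by simp
      have "dist m1 m3 = 2" using no_triangle[OF m1V m2V m3V d12 d23] ne by simp
      thus False using S'dist[OF m1 m3] by simp
    qed
    obtain e where e: "geo m1 m2 = [e]" using dist_le_1_geo[OF m1V m2V d12] by blast
    have "geo m2 m1 = map (\<phi>E h) [e]" using geo_act[OF m1V m2V hc] e m2_def m3_def m31 by simp
    moreover have "geo m2 m1 = [rv e]" using geo_eq[OF rp_rev[OF geo[OF m1V m2V]]] e by simp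
    moreover have "e \<in> E" using geo[OF m1V m2V] e by simp
    ultimately have "\<phi>E h e = rv e" "e \<in> E" by simp_all
    thus ?thesis using noinv[OF hc] by blast
  qed
qed

end


lemma common_prefix: "\<exists>c s1 s2. r1 = c @ s1 \<and> r2 = c @ s2 \<and> (s1 \<noteq> [] \<longrightarrow> s2 \<noteq> [] \<longrightarrow> hd s1 \<noteq> hd s2)"
proof (induction r1 arbitrary: r2)
  case Nil show ?case by (intro exI[of _ "[]"] exI[of _ "[]"] exI[of _ r2]) simp
next
  case (Cons x r1)
  show ?case
  proof (cases "r2 \<noteq> [] \<and> hd r2 = x")
    case True
    then obtain r2' where r2: "r2 = x # r2'" by (cases r2) auto
    obtain c s1 s2 where "r1 = c @ s1" "r2' = c @ s2" "s1 \<noteq> [] \<longrightarrow> s2 \<noteq> [] \<longrightarrow> hd s1 \<noteq> hd s2"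
      using Cons.IH by blast
    thus ?thesis using r2 by (intro exI[of _ "x # c"] exI[of _ s1] exI[of _ s2]) simp
  next
    case False
    thus ?thesis by (intro exI[of _ "[]"] exI[of _ "x # r1"] exI[of _ r2]) auto
  qed
qed

locale amalg = tact +
  fixes A B C
  assumes A: "subgroup A G" and B: "subgroup B G" and C: "C = A \<inter> B"
    and gen: "generate G (A \<union> B) = carrier G"
    and Afin: "finite A" and cardA: "card A = 24" and cardC: "card C = 8"
    and Bfin: "finite B" and CB: "C \<noteq> B"
    and nf: "\<And>a b k. a \<in> A - C \<Longrightarrow> b \<in> B - C \<Longrightarrow> k > 0 \<Longrightarrow> (a \<otimes> b) [^] (k::nat) \<noteq> \<one>"
    and noinv: "\<And>g e. g \<in> carrier G \<Longrightarrow> e \<in> E \<Longrightarrow> \<phi>E g e \<noteq> rv e"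
    and stabfin: "\<And>x. x \<in> V \<Longrightarrow> finite {g \<in> carrier G. \<phi>V g x = x}"
    and orbfin: "finite ((\<lambda>e. {\<phi>E g e | g. g \<in> carrier G}) ` E)"
    and ext: "\<And>e. e \<in> E \<Longrightarrow> \<exists>f\<in>E. org f = org (rv e) \<and> f \<noteq> rv e"
begin

lemma A_car: "a \<in> A \<Longrightarrow> a \<in> carrier G" by (rule subgroup.mem_carrier[OF A])
lemma B_car: "b \<in> B \<Longrightarrow> b \<in> carrier G" by (rule subgroup.mem_carrier[OF B])
lemma CA: "C \<subseteq> A" using C by simp
lemma CB': "C \<subseteq> B" using C by simp
lemma C_sub: "subgroup C G" using grp.subgroups_Inter_pair[OF A B] C by simp

lemma AC_ne: "\<exists>a. a \<in> A - C"
proof (rule ccontr)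
  assume "\<not> (\<exists>a. a \<in> A - C)"
  hence "A = C" using CA by auto
  thus False using cardA cardC by simp
qed

lemma BC_ne: "\<exists>b. b \<in> B - C"
proof (rule ccontr)
  assume "\<not> (\<exists>b. b \<in> B - C)"
  hence "B = C" using CB' by auto
  thus False using CB by simp
qed

definition FA where "FA = {x \<in> V. \<forall>a\<in>A. \<phi>V a x = x}"
definition FB where "FB = {x \<in> V. \<forall>b\<in>B. \<phi>V b x = x}"

lemma FA_ne: "FA \<noteq> {}"
proof -
  interpret tact_fp V E org rv G \<phi>V \<phi>E A
    by unfold_locales (insert A Afin noinv, auto simp: subgroup_def)
  show ?thesis using fixed_point unfolding FA_def by auto
qed

lemma FB_ne: "FB \<noteq> {}"
proof -
  interpret tact_fp V E org rv G \<phi>V \<phi>E B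
    by unfold_locales (insert B Bfin noinv, auto simp: subgroup_def)
  show ?thesis using fixed_point unfolding FB_def by auto
qed

lemma pow_fix: "g \<in> carrier G \<Longrightarrow> x \<in> V \<Longrightarrow> \<phi>V g x = x \<Longrightarrow> \<phi>V (g [^] (k::nat)) x = x"
proof (induction k)
  case 0 thus ?case using oneV by simp
next
  case (Suc k)
  have "\<phi>V (g [^] Suc k) x = \<phi>V (g [^] k) (\<phi>V g x)"
    using mulV[of "g [^] k" g x] Suc.prems by simp
  thus ?case using Suc by simp
qed

lemma no_fix_AB:
  assumes x: "x \<in> V" and xA: "\<forall>a\<in>A. \<phi>V a x = x" and b: "b \<in> B - C" and xb: "\<phi>V b x = x"
  shows False
proof -
  obtain a where a: "a \<in> A - C" using AC_ne by blast
  define g where "g = a \<otimes> b"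
  have gc: "g \<in> carrier G" using a b A_car B_car g_def by simp
  have gx: "\<phi>V g x = x" using mulV[of a b x] a b A_car B_car x xb xA g_def by simp
  have sub: "range (\<lambda>k::nat. g [^] k) \<subseteq> {h \<in> carrier G. \<phi>V h x = x}"
    using pow_fix[OF gc x gx] gc by auto
  have inj: "inj (\<lambda>k::nat. g [^] k)"
  proof (rule injI)
    fix i j :: nat assume eq: "g [^] i = g [^] j"
    show "i = j"
    proof (rule ccontr)
      assume "i \<noteq> j"
      hence "i < j \<or> j < i" by arith
      thus False
      proof
        assume ij: "i < j"
        have "g [^] i \<otimes> g [^] (j - i) = g [^] i" using grp.nat_pow_mult[OF gc, of i "j - i"] ij eq by simp
        hence "g [^] (j - i) = \<one>" using gc by simp
        thus False using nf[OF a b, of "j - i"] ij g_def by simp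
      next
        assume ji: "j < i"
        have "g [^] j \<otimes> g [^] (i - j) = g [^] j" using grp.nat_pow_mult[OF gc, of j "i - j"] ji eq by simp
        hence "g [^] (i - j) = \<one>" using gc by simp
        thus False using nf[OF a b, of "i - j"] ji g_def by simp
      qed
    qed
  qed
  have "infinite (range (\<lambda>k::nat. g [^] k))" using inj by (simp add: range_inj_infinite)
  thus False using stabfin[OF x] sub finite_subset by blast
qed

lemma FA_FB_disj: "FA \<inter> FB = {}"
proof (rule ccontr)
  assume "FA \<inter> FB \<noteq> {}"
  then obtain x where "x \<in> FA" "x \<in> FB" by blast
  moreover obtain b where "b \<in> B - C" using BC_ne by blast
  ultimately show False using no_fix_AB unfolding FA_def FB_def by auto
qed

lemma min_pair: "\<exists>v\<in>FA. \<exists>u\<in>FB. \<forall>v'\<in>FA. \<forall>u'\<in>FB. dist v u \<le> dist v' u'"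
proof -
  obtain v0 u0 where "v0 \<in> FA" "u0 \<in> FB" using FA_ne FB_ne by blast
  hence ex: "\<exists>k. \<exists>v\<in>FA. \<exists>u\<in>FB. dist v u = k" by blast
  define k where "k = (LEAST k. \<exists>v\<in>FA. \<exists>u\<in>FB. dist v u = k)"
  obtain v u where vu: "v \<in> FA" "u \<in> FB" "dist v u = k" using LeastI_ex[OF ex] k_def by blast
  have "\<forall>v'\<in>FA. \<forall>u'\<in>FB. dist v u \<le> dist v' u'"
  proof (intro ballI)
    fix v' u' assume "v' \<in> FA" "u' \<in> FB"
    hence "k \<le> dist v' u'" unfolding k_def by (intro Least_le) blast
    thus "dist v u \<le> dist v' u'" using vu by simp
  qed
  thus ?thesis using vu by blast
qed

end

lemma divisor_8_24: "(8::nat) dvd k \<Longrightarrow> k dvd 24 \<Longrightarrow> k = 8 \<or> k = 24"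
proof -
  assume a: "(8::nat) dvd k" "k dvd 24"
  then obtain m where m: "k = 8 * m" by (auto elim: dvdE)
  have "k \<le> 24" using a(2) by (simp add: dvd_imp_le)
  hence "m \<le> 3" using m by simp
  moreover have "m \<noteq> 0"
  proof
    assume "m = 0" thus False using a(2) m by simp
  qed
  moreover have "m \<noteq> 2" using a(2) m by auto
  ultimately have "m = 1 \<or> m = 3" by arith
  thus ?thesis using m by auto
qed

locale amalg_min = amalg +
  fixes v u
  assumes vFA: "v \<in> FA" and uFB: "u \<in> FB"
    and minimal: "\<And>v' u'. v' \<in> FA \<Longrightarrow> u' \<in> FB \<Longrightarrow> dist v u \<le> dist v' u'"
begin

lemma vV: "v \<in> V" using vFA FA_def by simp
lemma uV: "u \<in> V" using uFB FB_def by simp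
lemma vA: "a \<in> A \<Longrightarrow> \<phi>V a v = v" using vFA FA_def by simp
lemma uB: "b \<in> B \<Longrightarrow> \<phi>V b u = u" using uFB FB_def by simp
lemma v_ne_u: "v \<noteq> u" using FA_FB_disj vFA uFB by blast

definition p where "p = geo v u"
definition e1 where "e1 = hd p"

lemma P: "RP v p u" unfolding p_def using geo[OF vV uV] .

lemma p_ne: "p \<noteq> []" using P v_ne_u by (cases p) auto

lemma p_cons: "p = e1 # tl p" unfolding e1_def using p_ne by simp

lemma e1E: "e1 \<in> E" using P p_cons by (cases p) auto
lemma e1_org: "org e1 = v" using P p_cons by (cases p) auto

lemma C_fix_p: "c \<in> C \<Longrightarrow> map (\<phi>E c) p = p"
proof -
  assume c: "c \<in> C"
  have cc: "c \<in> carrier G" using c CA A_car by blast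
  have "geo (\<phi>V c v) (\<phi>V c u) = map (\<phi>E c) p" unfolding p_def using geo_act[OF vV uV cc] .
  moreover have "\<phi>V c v = v" using vA c CA by blast
  moreover have "\<phi>V c u = u" using uB c CB' by blast
  ultimately show ?thesis unfolding p_def by simp
qed

lemma C_fix_e1: "c \<in> C \<Longrightarrow> \<phi>E c e1 = e1"
proof -
  assume c: "c \<in> C"
  have "map (\<phi>E c) (e1 # tl p) = e1 # tl p" using C_fix_p[OF c] p_cons by simp
  thus ?thesis by simp
qed

definition StabA where "StabA = {a \<in> A. \<phi>E a e1 = e1}"

lemma StabA_sub: "subgroup StabA G"
proof (rule grp.subgroupI)
  show "StabA \<subseteq> carrier G" unfolding StabA_def using A_car by blast
  show "StabA \<noteq> {}" unfolding StabA_def using subgroup.one_closed[OF A] oneE[OF e1E] by blast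
  show "inv a \<in> StabA" if a: "a \<in> StabA" for a
  proof -
    have aA: "a \<in> A" and ae: "\<phi>E a e1 = e1" using a StabA_def by auto
    have "\<phi>E (inv a) e1 = \<phi>E (inv a) (\<phi>E a e1)" using ae by simp
    also have "\<dots> = e1" using invE[OF A_car[OF aA] e1E] .
    finally show ?thesis unfolding StabA_def using subgroup.m_inv_closed[OF A aA] by simp
  qed
  show "a \<otimes> b \<in> StabA" if a: "a \<in> StabA" and b: "b \<in> StabA" for a b
  proof -
    have aA: "a \<in> A" and ae: "\<phi>E a e1 = e1" using a StabA_def by auto
    have bA: "b \<in> A" and be: "\<phi>E b e1 = e1" using b StabA_def by auto
    have "\<phi>E (a \<otimes> b) e1 = e1" using mulE[OF A_car[OF aA] A_car[OF bA] e1E] ae be by simp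
    thus ?thesis unfolding StabA_def using subgroup.m_closed[OF A aA bA] by simp
  qed
qed

lemma C_StabA: "C \<subseteq> StabA" unfolding StabA_def using CA C_fix_e1 by blast

lemma StabA_ne_A: "StabA \<noteq> A"
proof
  assume eq: "StabA = A"
  define x1 where "x1 = org (rv e1)"
  have x1V: "x1 \<in> V" using E_trm[OF e1E] x1_def by simp
  have "\<phi>V a x1 = x1" if a: "a \<in> A" for a
  proof -
    have ae: "\<phi>E a e1 = e1" using a eq StabA_def by auto
    have "\<phi>V a x1 = org (\<phi>E a (rv e1))" using orgc[OF A_car[OF a] E_rv[OF e1E]] x1_def by simp
    also have "\<dots> = x1" using rvc[OF A_car[OF a] e1E] ae x1_def by simp
    finally show ?thesis .
  qed
  hence x1FA: "x1 \<in> FA" unfolding FA_def using x1V by blast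
  have "RP x1 (tl p) u" using P p_cons x1_def by (metis rp.simps(2))
  hence "dist x1 u = length (tl p)" by (rule dist_eq)
  moreover have "dist v u = length p" using P by (rule dist_eq)
  ultimately have "dist x1 u < dist v u" using p_ne by simp
  thus False using minimal[OF x1FA uFB] by simp
qed

lemma StabA_eq: "StabA = C"
proof -
  have SA: "StabA \<subseteq> A" unfolding StabA_def by blast
  have gA: "group (G\<lparr>carrier := A\<rparr>)" by (rule grp.subgroup_imp_group[OF A])
  have sA: "subgroup StabA (G\<lparr>carrier := A\<rparr>)" by (rule grp.subgroup_incl[OF StabA_sub A SA])
  have "card (rcosets\<^bsub>G\<lparr>carrier := A\<rparr>\<^esub> StabA) * card StabA = order (G\<lparr>carrier := A\<rparr>)"
    by (rule group.lagrange[OF gA sA])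
  hence d1: "card StabA dvd 24" using cardA unfolding order_def by (metis dvd_triv_right partial_object.select_convs(1) partial_object.surjective partial_object.update_convs(1))
  have gS: "group (G\<lparr>carrier := StabA\<rparr>)" by (rule grp.subgroup_imp_group[OF StabA_sub])
  have sC: "subgroup C (G\<lparr>carrier := StabA\<rparr>)" by (rule grp.subgroup_incl[OF C_sub StabA_sub C_StabA])
  have "card (rcosets\<^bsub>G\<lparr>carrier := StabA\<rparr>\<^esub> C) * card C = order (G\<lparr>carrier := StabA\<rparr>)"
    by (rule group.lagrange[OF gS sC])
  hence "card (rcosets\<^bsub>G\<lparr>carrier := StabA\<rparr>\<^esub> C) * 8 = card StabA" using cardC unfolding order_def by simp
  hence d2: "8 dvd card StabA" by (metis dvd_triv_right)
  have fS: "finite StabA" using Afin SA finite_subset by blast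
  from divisor_8_24[OF d2 d1] show ?thesis
  proof
    assume "card StabA = 8"
    thus ?thesis using card_subset_eq[OF fS C_StabA] cardC by simp
  next
    assume "card StabA = 24"
    hence "StabA = A" using card_subset_eq[OF Afin SA] cardA by simp
    thus ?thesis using StabA_ne_A by simp
  qed
qed

definition Orb where "Orb = (\<lambda>a. \<phi>E a e1) ` A"

lemma e1_Orb: "e1 \<in> Orb"
proof -
  have "\<phi>E \<one> e1 = e1" using oneE[OF e1E] .
  thus ?thesis unfolding Orb_def using subgroup.one_closed[OF A] by (metis image_eqI)
qed

lemma fiber_eq: "a0 \<in> A \<Longrightarrow> {a \<in> A. \<phi>E a e1 = \<phi>E a0 e1} = (\<lambda>c. a0 \<otimes> c) ` C"
proof -
  assume a0: "a0 \<in> A"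
  have a0c: "a0 \<in> carrier G" using A_car[OF a0] .
  show ?thesis
  proof
    show "{a \<in> A. \<phi>E a e1 = \<phi>E a0 e1} \<subseteq> (\<lambda>c. a0 \<otimes> c) ` C"
    proof
      fix a assume "a \<in> {a \<in> A. \<phi>E a e1 = \<phi>E a0 e1}"
      hence a: "a \<in> A" "\<phi>E a e1 = \<phi>E a0 e1" by auto
      have ac: "a \<in> carrier G" using A_car[OF a(1)] .
      define c where "c = inv a0 \<otimes> a"
      have cA: "c \<in> A" using c_def subgroup.m_closed[OF A subgroup.m_inv_closed[OF A a0] a(1)] by simp
      have cc: "c \<in> carrier G" using A_car[OF cA] .
      have "\<phi>E c e1 = \<phi>E (inv a0) (\<phi>E a e1)" using mulE[OF grp.inv_closed[OF a0c] ac e1E] c_def by simp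
      also have "\<dots> = e1" using a(2) invE[OF a0c e1E] by simp
      finally have "c \<in> StabA" unfolding StabA_def using cA by simp
      hence "c \<in> C" using StabA_eq by simp
      moreover have "a0 \<otimes> c = a" using c_def a0c ac by (simp add: grp.m_assoc[symmetric] grp.r_inv)
      ultimately show "a \<in> (\<lambda>c. a0 \<otimes> c) ` C" by (metis image_eqI)
    qed
  next
    show "(\<lambda>c. a0 \<otimes> c) ` C \<subseteq> {a \<in> A. \<phi>E a e1 = \<phi>E a0 e1}"
    proof
      fix x assume "x \<in> (\<lambda>c. a0 \<otimes> c) ` C"
      then obtain c where c: "c \<in> C" "x = a0 \<otimes> c" by blast
      have cA: "c \<in> A" using c(1) CA by blast
      have "x \<in> A" using c(2) subgroup.m_closed[OF A a0 cA] by simp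
      moreover have "\<phi>E x e1 = \<phi>E a0 e1"
        using c(2) mulE[OF a0c A_car[OF cA] e1E] C_fix_e1[OF c(1)] by simp
      ultimately show "x \<in> {a \<in> A. \<phi>E a e1 = \<phi>E a0 e1}" by simp
    qed
  qed
qed

lemma card_fiber: "a0 \<in> A \<Longrightarrow> card {a \<in> A. \<phi>E a e1 = \<phi>E a0 e1} = 8"
proof -
  assume a0: "a0 \<in> A"
  have a0c: "a0 \<in> carrier G" using A_car[OF a0] .
  have "inj_on (\<lambda>c. a0 \<otimes> c) C"
  proof (rule inj_onI)
    fix x y assume xy: "x \<in> C" "y \<in> C" "a0 \<otimes> x = a0 \<otimes> y"
    have "x \<in> carrier G" "y \<in> carrier G" using xy CA A_car by auto
    thus "x = y" using xy(3) a0c grp.Units_l_cancel[of a0 x y] grp.Units_eq by simp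
  qed
  hence "card ((\<lambda>c. a0 \<otimes> c) ` C) = card C" by (rule card_image)
  thus ?thesis using fiber_eq[OF a0] cardC by simp
qed

lemma card_Orb: "card Orb = 3"
proof -
  define fb where "fb y = {a \<in> A. \<phi>E a e1 = y}" for y
  have fO: "finite Orb" unfolding Orb_def using Afin by simp
  have U: "A = \<Union>(fb ` Orb)" unfolding fb_def Orb_def by auto
  have "card (\<Union>(fb ` Orb)) = (\<Sum>y\<in>Orb. card (fb y))"
  proof (rule card_UN_disjoint)
    show "finite Orb" using fO .
    show "\<forall>y\<in>Orb. finite (fb y)" unfolding fb_def using Afin by simp
    show "\<forall>y\<in>Orb. \<forall>z\<in>Orb. y \<noteq> z \<longrightarrow> fb y \<inter> fb z = {}" unfolding fb_def by auto
  qed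
  also have "\<dots> = (\<Sum>y\<in>Orb. 8)"
  proof (rule sum.cong)
    fix y assume "y \<in> Orb"
    then obtain a0 where "a0 \<in> A" "y = \<phi>E a0 e1" unfolding Orb_def by blast
    thus "card (fb y) = 8" unfolding fb_def using card_fiber by simp
  qed simp
  finally have "card A = card Orb * 8" using U by simp
  thus ?thesis using cardA by simp
qed

lemma Orb_E: "f \<in> Orb \<Longrightarrow> f \<in> E \<and> org f = v"
proof -
  assume "f \<in> Orb"
  then obtain a where a: "a \<in> A" "f = \<phi>E a e1" unfolding Orb_def by blast
  have "f \<in> E" using actE[OF A_car[OF a(1)] e1E] a by simp
  moreover have "org f = v" using orgc[OF A_car[OF a(1)] e1E] a vA[OF a(1)] e1_org by simp
  ultimately show ?thesis by simp
qed

inductive R where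
  RA: "a \<in> A - C \<Longrightarrow> R False w \<Longrightarrow> R True (\<phi>V a w)"
| RB: "b \<in> B - C \<Longrightarrow> w = v \<or> R True w \<Longrightarrow> R False (\<phi>V b w)"

lemma R_V: "R t w \<Longrightarrow> w \<in> V"
proof (induction rule: R.induct)
  case (RA a w) thus ?case using actV A_car by simp
next
  case (RB b w) thus ?case using actV B_car vV by auto
qed

lemma R_C: "c \<in> C \<Longrightarrow> R t w \<Longrightarrow> R t (\<phi>V c w)"
proof -
  assume c: "c \<in> C" and Rw: "R t w"
  have cA: "c \<in> A" and cB: "c \<in> B" using c CA CB' by auto
  have cc: "c \<in> carrier G" using A_car[OF cA] .
  from Rw show ?thesis
  proof (cases rule: R.cases)
    case (RA a w0)
    have w0: "w0 \<in> V" using R_V[OF RA(4)] .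
    have ac: "a \<in> carrier G" using RA(3) A_car by simp
    have eq: "\<phi>V c w = \<phi>V (c \<otimes> a) w0" using RA(2) mulV[OF cc ac w0] by simp
    have caA: "c \<otimes> a \<in> A" using subgroup.m_closed[OF A cA] RA(3) by simp
    have "c \<otimes> a \<notin> C"
    proof
      assume "c \<otimes> a \<in> C"
      hence "inv c \<otimes> (c \<otimes> a) \<in> C" using subgroup.m_closed[OF C_sub subgroup.m_inv_closed[OF C_sub c]] by simp
      moreover have "inv c \<otimes> (c \<otimes> a) = a" using cc ac by (simp add: grp.m_assoc[symmetric] grp.l_inv)
      ultimately show False using RA(3) by simp
    qed
    hence "R True (\<phi>V (c \<otimes> a) w0)" using R.RA[of "c \<otimes> a" w0] caA RA(4) by simp
    thus ?thesis using eq RA(1) by simp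
  next
    case (RB b w0)
    have w0: "w0 \<in> V" using RB(4) R_V vV by auto
    have bc: "b \<in> carrier G" using RB(3) B_car by simp
    have eq: "\<phi>V c w = \<phi>V (c \<otimes> b) w0" using RB(2) mulV[OF cc bc w0] by simp
    have cbB: "c \<otimes> b \<in> B" using subgroup.m_closed[OF B cB] RB(3) by simp
    have "c \<otimes> b \<notin> C"
    proof
      assume "c \<otimes> b \<in> C"
      hence "inv c \<otimes> (c \<otimes> b) \<in> C" using subgroup.m_closed[OF C_sub subgroup.m_inv_closed[OF C_sub c]] by simp
      moreover have "inv c \<otimes> (c \<otimes> b) = b" using cc bc by (simp add: grp.m_assoc[symmetric] grp.l_inv)
      ultimately show False using RB(3) by simp
    qed
    hence "R False (\<phi>V (c \<otimes> b) w0)" using R.RB[of "c \<otimes> b" w0] cbB RB(4) by simp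
    thus ?thesis using eq RB(1) by simp
  qed
qed

definition Z where "Z w \<longleftrightarrow> w = v \<or> R True w \<or> R False w"

lemma Z_V: "Z w \<Longrightarrow> w \<in> V" unfolding Z_def using vV R_V by auto

lemma Z_A: "a \<in> A \<Longrightarrow> Z w \<Longrightarrow> Z (\<phi>V a w)"
proof -
  assume a: "a \<in> A" and Zw: "Z w"
  have ac: "a \<in> carrier G" using A_car[OF a] .
  consider "w = v" | "R False w" | "R True w" using Zw Z_def by auto
  thus ?thesis
  proof cases
    case 1 thus ?thesis using vA[OF a] Z_def by simp
  next
    case 2
    show ?thesis
    proof (cases "a \<in> C")
      case True thus ?thesis using R_C[OF True 2] Z_def by simp
    next
      case False thus ?thesis using R.RA[of a w] a 2 Z_def by simp
    qed
  next
    case 3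
    then obtain a1 w1 where w: "w = \<phi>V a1 w1" "a1 \<in> A - C" "R False w1" by (cases rule: R.cases) auto
    have a1c: "a1 \<in> carrier G" using w(2) A_car by simp
    have eq: "\<phi>V a w = \<phi>V (a \<otimes> a1) w1" using w(1) mulV[OF ac a1c R_V[OF w(3)]] by simp
    have aa1: "a \<otimes> a1 \<in> A" using subgroup.m_closed[OF A a] w(2) by simp
    show ?thesis
    proof (cases "a \<otimes> a1 \<in> C")
      case True thus ?thesis using R_C[OF True w(3)] eq Z_def by simp
    next
      case False thus ?thesis using R.RA[of "a \<otimes> a1" w1] aa1 w(3) eq Z_def by simp
    qed
  qed
qed

lemma Z_B: "b \<in> B \<Longrightarrow> Z w \<Longrightarrow> Z (\<phi>V b w)"
proof -
  assume b: "b \<in> B" and Zw: "Z w"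
  have bc: "b \<in> carrier G" using B_car[OF b] .
  consider "w = v" | "R True w" | "R False w" using Zw Z_def by auto
  thus ?thesis
  proof cases
    case 1
    show ?thesis
    proof (cases "b \<in> C")
      case True thus ?thesis using vA[of b] CA 1 Z_def by auto
    next
      case False thus ?thesis using R.RB[of b w] b 1 Z_def by simp
    qed
  next
    case 2
    show ?thesis
    proof (cases "b \<in> C")
      case True thus ?thesis using R_C[OF True 2] Z_def by simp
    next
      case False thus ?thesis using R.RB[of b w] b 2 Z_def by simp
    qed
  next
    case 3
    then obtain b1 w1 where w: "w = \<phi>V b1 w1" "b1 \<in> B - C" "w1 = v \<or> R True w1" by (cases rule: R.cases) auto
    have b1c: "b1 \<in> carrier G" using w(2) B_car by simp
    have w1V: "w1 \<in> V" using w(3) vV R_V by auto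
    have eq: "\<phi>V b w = \<phi>V (b \<otimes> b1) w1" using w(1) mulV[OF bc b1c w1V] by simp
    have bb1: "b \<otimes> b1 \<in> B" using subgroup.m_closed[OF B b] w(2) by simp
    show ?thesis
    proof (cases "b \<otimes> b1 \<in> C")
      case True
      show ?thesis
      proof (cases "w1 = v")
        case True2: True
        have "\<phi>V (b \<otimes> b1) v = v" using vA True CA by auto
        thus ?thesis using eq True2 Z_def by simp
      next
        case False
        hence "R True w1" using w(3) by simp
        thus ?thesis using R_C[OF True] eq Z_def by simp
      qed
    next
      case False thus ?thesis using R.RB[of "b \<otimes> b1" w1] bb1 w(3) eq Z_def by simp
    qed
  qed
qed

lemma Z_all: "g \<in> carrier G \<Longrightarrow> Z (\<phi>V g v)"
proof -
  assume g: "g \<in> carrier G"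
  define K where "K = {g \<in> carrier G. \<forall>w. Z w \<longrightarrow> Z (\<phi>V g w) \<and> Z (\<phi>V (inv g) w)}"
  have subK: "subgroup K G"
  proof (rule grp.subgroupI)
    show "K \<subseteq> carrier G" unfolding K_def by blast
    have "\<one> \<in> K" unfolding K_def using oneV Z_V by auto
    thus "K \<noteq> {}" by blast
    show "inv a \<in> K" if "a \<in> K" for a using that unfolding K_def by auto
    show "a \<otimes> b \<in> K" if a: "a \<in> K" and b: "b \<in> K" for a b
    proof -
      have ac: "a \<in> carrier G" and bc: "b \<in> carrier G" using a b K_def by auto
      have "Z (\<phi>V (a \<otimes> b) w) \<and> Z (\<phi>V (inv (a \<otimes> b)) w)" if w: "Z w" for w
      proof
        have "\<phi>V (a \<otimes> b) w = \<phi>V a (\<phi>V b w)" using mulV[OF ac bc Z_V[OF w]] .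
        thus "Z (\<phi>V (a \<otimes> b) w)" using a b w K_def by auto
      next
        have "inv (a \<otimes> b) = inv b \<otimes> inv a" using grp.inv_mult_group[OF ac bc] .
        hence "\<phi>V (inv (a \<otimes> b)) w = \<phi>V (inv b) (\<phi>V (inv a) w)"
          using mulV[OF grp.inv_closed[OF bc] grp.inv_closed[OF ac] Z_V[OF w]] by simp
        thus "Z (\<phi>V (inv (a \<otimes> b)) w)" using a b w K_def by auto
      qed
      thus ?thesis unfolding K_def using ac bc by auto
    qed
  qed
  have "A \<union> B \<subseteq> K"
  proof
    fix x assume x: "x \<in> A \<union> B"
    show "x \<in> K"
    proof (cases "x \<in> A")
      case True
      have "inv x \<in> A" using subgroup.m_inv_closed[OF A True] .
      thus ?thesis unfolding K_def using True A_car Z_A by auto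
    next
      case False
      hence xB: "x \<in> B" using x by simp
      have "inv x \<in> B" using subgroup.m_inv_closed[OF B xB] .
      thus ?thesis unfolding K_def using xB B_car Z_B by auto
    qed
  qed
  hence "generate G (A \<union> B) \<subseteq> K" by (rule grp.generate_subgroup_incl[OF _ subK])
  hence "carrier G \<subseteq> K" using gen by simp
  hence "g \<in> K" using g by (rule subsetD)
  moreover have "Z v" unfolding Z_def by simp
  ultimately show ?thesis unfolding K_def by simp
qed

lemma bc_moves_v: "b \<in> B - C \<Longrightarrow> \<phi>V b v \<noteq> v"
proof
  assume b: "b \<in> B - C" and bv: "\<phi>V b v = v"
  have "\<forall>a\<in>A. \<phi>V a v = v" using vA by simp
  thus False using no_fix_AB[OF vV _ b bv] by simp
qed

lemma q_last: "last (rev (map rv p)) = rv e1"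
proof -
  have "rev (map rv p) = rev (map rv (tl p)) @ [rv e1]" using p_cons by (metis list.simps(9) rev.simps(2))
  thus ?thesis by simp
qed

lemma RB_geo:
  assumes b: "b \<in> B - C" and S: "RP v s w" and hs: "s \<noteq> [] \<longrightarrow> hd s \<noteq> e1"
  shows "\<exists>r. RP v (e1 # r) (\<phi>V b w)"
proof -
  define q where "q = rev (map rv p)"
  have Q: "RP u q v" unfolding q_def using rp_rev[OF P] .
  have ql: "last q = rv e1" unfolding q_def using q_last .
  have qne: "q \<noteq> []" unfolding q_def using p_ne by simp
  have QS: "RP u (q @ s) w"
  proof (rule rp_append[OF Q S])
    show "q \<noteq> [] \<longrightarrow> s \<noteq> [] \<longrightarrow> hd s \<noteq> rv (last q)" using ql hs rv_rv[OF e1E] by simp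
  qed
  have bc: "b \<in> carrier G" using b B_car by simp
  have QSb: "RP u (map (\<phi>E b) (q @ s)) (\<phi>V b w)" using rp_act[OF QS bc] uB b by simp
  obtain c s1 s2 where cs: "q = c @ s1" "map (\<phi>E b) (q @ s) = c @ s2" "s1 \<noteq> [] \<longrightarrow> s2 \<noteq> [] \<longrightarrow> hd s1 \<noteq> hd s2"
    using common_prefix[of q "map (\<phi>E b) (q @ s)"] by (elim exE conjE) simp
  have Q': "RP u (c @ s1) v" using Q cs(1) by simp
  obtain y where y: "RP u c y" "RP y s1 v" using rp_appendD[OF Q'] by blast
  have QSb': "RP u (c @ s2) (\<phi>V b w)" using QSb cs(2) by simp
  obtain y' where y': "RP u c y'" "RP y' s2 (\<phi>V b w)" using rp_appendD[OF QSb'] by blast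
  have yy: "y' = y" using rp_end_unique[OF y(1) y'(1)] by simp
  have s1ne: "s1 \<noteq> []"
  proof
    assume s1: "s1 = []"
    hence "c = q" using cs(1) by simp
    hence "map (\<phi>E b) q @ map (\<phi>E b) s = q @ s2" using cs(2) by simp
    hence mq: "map (\<phi>E b) q = q" by simp
    have "RP u (map (\<phi>E b) q) (\<phi>V b v)" using rp_act[OF Q bc] uB b by simp
    hence "RP u q (\<phi>V b v)" using mq by simp
    hence "v = \<phi>V b v" by (rule rp_end_unique[OF Q])
    hence "\<phi>V b v = v" by simp
    thus False using bc_moves_v b by simp
  qed
  have R1: "RP v (rev (map rv s1)) y" using rp_rev[OF y(2)] .
  have hs1E: "hd s1 \<in> E" using rp_E[OF y(2)] s1ne by (cases s1) auto
  have l1: "last (rev (map rv s1)) = rv (hd s1)" using s1ne by (cases s1) (auto simp: last_rev)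
  have R2: "RP v (rev (map rv s1) @ s2) (\<phi>V b w)"
  proof (rule rp_append[OF R1])
    show "RP y s2 (\<phi>V b w)" using y'(2) yy by simp
    show "rev (map rv s1) \<noteq> [] \<longrightarrow> s2 \<noteq> [] \<longrightarrow> hd s2 \<noteq> rv (last (rev (map rv s1)))"
      using l1 rv_rv[OF hs1E] cs(3) s1ne by auto
  qed
  have "last s1 = last q" using cs(1) s1ne by simp
  hence "hd (rev (map rv s1)) = e1" using ql s1ne rv_rv[OF e1E] by (simp add: hd_rev last_map)
  hence "hd (rev (map rv s1) @ s2) = e1" using s1ne by simp
  moreover have "rev (map rv s1) @ s2 \<noteq> []" using s1ne by simp
  ultimately have eq: "e1 # tl (rev (map rv s1) @ s2) = rev (map rv s1) @ s2" using list.collapse by metis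
  have "RP v (e1 # tl (rev (map rv s1) @ s2)) (\<phi>V b w)" unfolding eq using R2 .
  thus ?thesis by (rule exI)
qed

lemma R_geo: "R t w \<Longrightarrow> (t \<longrightarrow> (\<exists>f r. RP v (f # r) w \<and> f \<in> Orb \<and> f \<noteq> e1)) \<and> (\<not> t \<longrightarrow> (\<exists>r. RP v (e1 # r) w))"
proof (induction rule: R.induct)
  case (RA a w)
  then obtain r where r: "RP v (e1 # r) w" by auto
  have ac: "a \<in> carrier G" using RA(1) A_car by simp
  have "RP (\<phi>V a v) (map (\<phi>E a) (e1 # r)) (\<phi>V a w)" using rp_act[OF r ac] .
  hence X: "RP v (\<phi>E a e1 # map (\<phi>E a) r) (\<phi>V a w)" using vA RA(1) by simp
  have "\<phi>E a e1 \<in> Orb" unfolding Orb_def using RA(1) by simp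
  moreover have "\<phi>E a e1 \<noteq> e1"
  proof
    assume "\<phi>E a e1 = e1"
    hence "a \<in> StabA" unfolding StabA_def using RA(1) by simp
    thus False using StabA_eq RA(1) by simp
  qed
  ultimately show ?case using X by blast
next
  case (RB b w)
  have "\<exists>s. RP v s w \<and> (s \<noteq> [] \<longrightarrow> hd s \<noteq> e1)"
  proof (cases "w = v")
    case True thus ?thesis using vV by (intro exI[of _ "[]"]) simp
  next
    case False
    then obtain f r where "RP v (f # r) w" "f \<noteq> e1" using RB by auto
    thus ?thesis by (intro exI[of _ "f # r"]) simp
  qed
  then obtain s where "RP v s w" "s \<noteq> [] \<longrightarrow> hd s \<noteq> e1" by blast
  thus ?case using RB_geo[OF RB(1)] by simp
qed

lemma Omega: "g \<in> carrier G \<Longrightarrow> \<phi>V g v = v \<or> (\<exists>f r. RP v (f # r) (\<phi>V g v) \<and> f \<in> Orb)"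
proof -
  assume g: "g \<in> carrier G"
  have "Z (\<phi>V g v)" using Z_all[OF g] .
  hence "\<phi>V g v = v \<or> R True (\<phi>V g v) \<or> R False (\<phi>V g v)" unfolding Z_def .
  thus ?thesis
  proof (elim disjE)
    assume "R True (\<phi>V g v)"
    hence "\<exists>f r. RP v (f # r) (\<phi>V g v) \<and> f \<in> Orb \<and> f \<noteq> e1" using R_geo[of True] by simp
    thus ?thesis by blast
  next
    assume "R False (\<phi>V g v)"
    hence "\<exists>r. RP v (e1 # r) (\<phi>V g v)" using R_geo[of False] by simp
    thus ?thesis using e1_Orb by blast
  qed simp
qed

primrec ray where
  "ray f 0 = f"
| "ray f (Suc n) = (SOME f'. f' \<in> E \<and> org f' = org (rv (ray f n)) \<and> f' \<noteq> rv (ray f n))"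

lemma ray_E: "f \<in> E \<Longrightarrow> ray f n \<in> E"
proof (induction n)
  case 0 thus ?case by simp
next
  case (Suc n)
  have "\<exists>f'. f' \<in> E \<and> org f' = org (rv (ray f n)) \<and> f' \<noteq> rv (ray f n)" using ext[OF Suc.IH[OF Suc.prems]] by blast
  from someI_ex[OF this] show ?case by simp
qed

lemma ray_Suc: "f \<in> E \<Longrightarrow> org (ray f (Suc n)) = org (rv (ray f n)) \<and> ray f (Suc n) \<noteq> rv (ray f n)"
proof -
  assume f: "f \<in> E"
  have "\<exists>f'. f' \<in> E \<and> org f' = org (rv (ray f n)) \<and> f' \<noteq> rv (ray f n)" using ext[OF ray_E[OF f]] by blast
  from someI_ex[OF this] show ?thesis by simp
qed

lemma ray_path: "f \<in> E \<Longrightarrow> org f = v \<Longrightarrow> RP v (map (ray f) [0..<Suc n]) (org (rv (ray f n)))"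
proof (induction n)
  case 0 thus ?case using vV E_trm by simp
next
  case (Suc n)
  have "RP v (map (ray f) [0..<Suc n] @ [ray f (Suc n)]) (org (rv (ray f (Suc n))))"
  proof (rule rp_snoc[OF Suc.IH[OF Suc.prems]])
    show "ray f (Suc n) \<in> E" using ray_E Suc.prems by blast
    show "org (ray f (Suc n)) = org (rv (ray f n))" using ray_Suc Suc.prems by blast
    show "map (ray f) [0..<Suc n] \<noteq> [] \<longrightarrow> ray f (Suc n) \<noteq> rv (last (map (ray f) [0..<Suc n]))"
      using ray_Suc Suc.prems by simp
  qed
  thus ?case by simp
qed

lemma ray_back: "f \<in> E \<Longrightarrow> org f = v \<Longrightarrow> RP (org (rv (ray f n))) (rev (map rv (map (ray f) [0..<Suc n]))) v"
  by (rule rp_rev[OF ray_path])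

lemma ray_far:
  assumes f: "f \<in> E" "org f = v" "f \<notin> Orb" and g: "g \<in> carrier G"
  shows "Suc n \<le> dist (org (rv (ray f n))) (\<phi>V g v)"
proof -
  define L where "L = rev (map rv (map (ray f) [0..<Suc n]))"
  have RL: "RP (org (rv (ray f n))) L v" unfolding L_def using ray_back[OF f(1,2)] .
  have lenL: "length L = Suc n" unfolding L_def by simp
  have lastL: "last L = rv f" unfolding L_def by (simp add: last_rev hd_map)
  from Omega[OF g] show ?thesis
  proof
    assume "\<phi>V g v = v"
    thus ?thesis using dist_eq[OF RL] lenL by simp
  next
    assume "\<exists>f' r. RP v (f' # r) (\<phi>V g v) \<and> f' \<in> Orb"
    then obtain f' r where fr: "RP v (f' # r) (\<phi>V g v)" "f' \<in> Orb" by blast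
    have "f' \<noteq> f" using fr(2) f(3) by auto
    hence "RP (org (rv (ray f n))) (L @ (f' # r)) (\<phi>V g v)"
      using rp_append[OF RL fr(1)] lastL rv_rv[OF f(1)] by simp
    hence "dist (org (rv (ray f n))) (\<phi>V g v) = length L + Suc (length r)" using dist_eq by fastforce
    thus ?thesis using lenL by simp
  qed
qed

lemma edges_at_v: "f \<in> E \<Longrightarrow> org f = v \<Longrightarrow> f \<in> Orb"
proof (rule ccontr)
  assume f: "f \<in> E" "org f = v" and nf: "f \<notin> Orb"
  define ob where "ob e = {\<phi>E g e | g. g \<in> carrier G}" for e
  define h where "h n = ob (ray f n)" for n
  have "range h \<subseteq> (\<lambda>e. {\<phi>E g e | g. g \<in> carrier G}) ` E"
    unfolding h_def ob_def using ray_E[OF f(1)] by blast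
  hence fin: "finite (range h)" by (rule finite_subset[OF _ orbfin])
  obtain y where "y \<in> range h" and inf: "infinite (h -` {y})"
    using inf_img_fin_domE[OF fin] by blast
  have "h -` {y} \<noteq> {}" using inf by auto
  then obtain i where i: "i \<in> h -` {y}" by blast
  have "\<not> (h -` {y} \<subseteq> {i})"
  proof
    assume "h -` {y} \<subseteq> {i}"
    hence "finite (h -` {y})" by (rule finite_subset) simp
    thus False using inf by simp
  qed
  then obtain j where j: "j \<in> h -` {y} - {i}" by blast
  have hij: "h i = h j" and ij: "i \<noteq> j" using i j by auto
  have key: "False" if lt: "i' < j'" and hh: "h i' = h j'" for i' j'
  proof -
    have rj: "ray f j' \<in> E" using ray_E[OF f(1)] .
    have "ray f j' = \<phi>E \<one> (ray f j') \<and> \<one> \<in> carrier G" using oneE[OF rj] by simp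
    hence "ray f j' \<in> ob (ray f j')" unfolding ob_def by blast
    hence "ray f j' \<in> ob (ray f i')" using hh h_def by simp
    hence "\<exists>g. ray f j' = \<phi>E g (ray f i') \<and> g \<in> carrier G" unfolding ob_def by simp
    then obtain g where g: "g \<in> carrier G" "ray f j' = \<phi>E g (ray f i')" by blast
    have ri: "ray f i' \<in> E" using ray_E[OF f(1)] .
    have "org (rv (ray f j')) = \<phi>V g (org (rv (ray f i')))"
      using g orgc[OF g(1) E_rv[OF ri]] rvc[OF g(1) ri] by simp
    hence "dist (org (rv (ray f j'))) (\<phi>V g v) = dist (org (rv (ray f i'))) v"
      using dist_act[OF E_trm[OF ri] vV g(1)] by simp
    also have "\<dots> = Suc i'" using dist_eq[OF ray_back[OF f(1,2)]] by simp
    finally have "dist (org (rv (ray f j'))) (\<phi>V g v) = Suc i'" .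
    moreover have "Suc j' \<le> dist (org (rv (ray f j'))) (\<phi>V g v)" using ray_far[OF f nf g(1)] .
    ultimately show False using lt by simp
  qed
  show False
  proof (cases "i < j")
    case True thus ?thesis using key[OF True hij] by simp
  next
    case False
    hence "j < i" using ij by simp
    thus ?thesis using key[OF _ hij[symmetric]] by simp
  qed
qed

theorem result: "\<exists>x\<in>V. (\<forall>a\<in>A. \<phi>V a x = x) \<and> card {e \<in> E. org e = x} = 3"
proof -
  have "{e \<in> E. org e = v} = Orb" using edges_at_v Orb_E by blast
  hence "card {e \<in> E. org e = v} = 3" using card_Orb by simp
  moreover have "\<forall>a\<in>A. \<phi>V a v = v" using vA by simp
  ultimately show ?thesis using vV by blast
qed

end


context sgraph begin

lemma rp_pth: "RP x r y \<Longrightarrow> PT x r y"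
  by (induction r arbitrary: x) auto

lemma pth_append: "PT x r1 y \<Longrightarrow> PT y r2 z \<Longrightarrow> PT x (r1 @ r2) z"
  by (induction r1 arbitrary: x) auto

lemma pth_V: "PT x r y \<Longrightarrow> x \<in> V \<and> y \<in> V"
  by (induction r arbitrary: x) auto

end

context stree begin

definition V2 where "V2 = Inl ` V \<union> Inr ` ((\<lambda>e. {e, rv e}) ` E)"
definition E2 where "E2 = E \<times> (UNIV :: bool set)"
definition org2 where "org2 = (\<lambda>(e, b). if b then Inr {e, rv e} else Inl (org e))"
definition rv2 where "rv2 = (\<lambda>(e, b). (e, \<not> b))"

lemma org2_T[simp]: "org2 (e, True) = Inr {e, rv e}" by (simp add: org2_def)
lemma org2_F[simp]: "org2 (e, False) = Inl (org e)" by (simp add: org2_def)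
lemma rv2_simp[simp]: "rv2 (e, b) = (e, \<not> b)" by (simp add: rv2_def)
lemma E2_iff[simp]: "(e, b) \<in> E2 \<longleftrightarrow> e \<in> E" by (simp add: E2_def)
lemma Inl_V2[simp]: "Inl x \<in> V2 \<longleftrightarrow> x \<in> V" by (auto simp: V2_def)
lemma Inr_V2: "e \<in> E \<Longrightarrow> Inr {e, rv e} \<in> V2" by (auto simp: V2_def)
lemma pair_eq: "{e2, rv e2} = {e, rv e} \<Longrightarrow> e2 = e \<or> e2 = rv e" by blast
lemma pair_rv: "e \<in> E \<Longrightarrow> {rv e, rv (rv e)} = {e, rv e}" by auto

lemma sg2: "serre_graph V2 E2 org2 rv2"
  unfolding serre_graph_def
proof
  fix x assume x: "x \<in> E2"
  obtain e b where xe: "x = (e, b)" by (cases x)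
  have e: "e \<in> E" using x xe by simp
  show "org2 x \<in> V2 \<and> rv2 x \<in> E2 \<and> rv2 (rv2 x) = x \<and> rv2 x \<noteq> x"
    using e xe Inr_V2[OF e] E_org[OF e] by (cases b) auto
qed

abbreviation "RP2 \<equiv> rp V2 E2 org2 rv2"
abbreviation "PT2 \<equiv> pth V2 E2 org2 rv2"

definition lift where "lift r = concat (map (\<lambda>e. [(e, False), (rv e, True)]) r)"

lemma lift_Nil[simp]: "lift [] = []" by (simp add: lift_def)
lemma lift_Cons[simp]: "lift (e # r) = (e, False) # (rv e, True) # lift r" by (simp add: lift_def)

lemma lift_pth: "RP x r y \<Longrightarrow> PT2 (Inl x) (lift r) (Inl y)"
proof (induction r arbitrary: x)
  case Nil thus ?case by auto
next
  case (Cons e r)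
  have e: "e \<in> E" "org e = x" "x \<in> V" "RP (org (rv e)) r y" using Cons.prems by simp_all
  have IH: "PT2 (Inl (org (rv e))) (lift r) (Inl y)" using Cons.IH[OF e(4)] .
  have "PT2 (org2 (rv e, False)) (lift r) (Inl y)" using IH by simp
  hence "PT2 (Inr {e, rv e}) ((rv e, True) # lift r) (Inl y)"
    using e(1) E_rv[OF e(1)] Inr_V2[OF e(1)] pair_rv[OF e(1)] by simp
  thus ?case using e by simp
qed

lemma proj: "RP2 (Inl a) P (Inl b) \<Longrightarrow> \<exists>Q. RP a Q b \<and> P = lift Q"
proof (induction "length P" arbitrary: P a rule: less_induct)
  case less
  show ?case
  proof (cases P)
    case Nil thus ?thesis using less.prems by (intro exI[of _ "[]"]) auto
  next
    case (Cons p1 P1)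
    obtain e \<beta> where p1: "p1 = (e, \<beta>)" by (cases p1)
    have h1: "p1 \<in> E2" "org2 p1 = Inl a" "RP2 (org2 (rv2 p1)) P1 (Inl b)" "P1 \<noteq> [] \<longrightarrow> hd P1 \<noteq> rv2 p1"
      using less.prems Cons by simp_all
    have eE: "e \<in> E" using h1(1) p1 by simp
    have \<beta>: "\<beta> = False" using h1(2) p1 by (cases \<beta>) simp_all
    have ea: "org e = a" using h1(2) p1 \<beta> by simp
    have R1: "RP2 (Inr {e, rv e}) P1 (Inl b)" using h1(3) p1 \<beta> by simp
    obtain p2 P2 where P1: "P1 = p2 # P2" using R1 by (cases P1) auto
    obtain e2 \<beta>2 where p2: "p2 = (e2, \<beta>2)" by (cases p2)
    have h2: "p2 \<in> E2" "org2 p2 = Inr {e, rv e}" "RP2 (org2 (rv2 p2)) P2 (Inl b)" "P2 \<noteq> [] \<longrightarrow> hd P2 \<noteq> rv2 p2"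
      using R1 P1 by simp_all
    have \<beta>2: "\<beta>2 = True" using h2(2) p2 by (cases \<beta>2) simp_all
    have "{e2, rv e2} = {e, rv e}" using h2(2) p2 \<beta>2 by simp
    hence "e2 = e \<or> e2 = rv e" by (rule pair_eq)
    moreover have "p2 \<noteq> rv2 p1" using h1(4) P1 by simp
    ultimately have e2: "e2 = rv e" using p1 p2 \<beta> \<beta>2 by auto
    have R2: "RP2 (Inl (org (rv e))) P2 (Inl b)" using h2(3) p2 \<beta>2 e2 by simp
    have "length P2 < length P" using Cons P1 by simp
    then obtain Q2 where Q2: "RP (org (rv e)) Q2 b" "P2 = lift Q2" using less.hyps R2 by blast
    have "Q2 \<noteq> [] \<longrightarrow> hd Q2 \<noteq> rv e"
    proof
      assume "Q2 \<noteq> []"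
      then obtain f Q3 where "Q2 = f # Q3" by (cases Q2) auto
      thus "hd Q2 \<noteq> rv e" using h2(4) Q2(2) p2 \<beta>2 e2 by simp
    qed
    hence "RP a (e # Q2) b" using eE ea Q2(1) E_org[OF eE] by simp
    moreover have "P = lift (e # Q2)" using Cons p1 \<beta> P1 p2 \<beta>2 e2 Q2(2) by simp
    ultimately show ?thesis by blast
  qed
qed

lemma no_cycle2: "RP2 x P x \<Longrightarrow> P = []"
proof -
  interpret S2: sgraph V2 E2 org2 rv2 by (rule sgraph.intro[OF sg2])
  assume R: "RP2 x P x"
  have xV: "x \<in> V2" using S2.rp_V[OF R] by simp
  show "P = []"
  proof (cases x)
    case (Inl a)
    then obtain Q where Q: "RP a Q a" "P = lift Q" using proj R by blast
    have "Q = []" using no_cycle[OF Q(1)] .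
    thus ?thesis using Q(2) by simp
  next
    case (Inr m)
    show ?thesis
    proof (rule ccontr)
      assume "P \<noteq> []"
      then obtain p1 P1 where P: "P = p1 # P1" by (cases P) auto
      obtain e1 \<beta> where p1: "p1 = (e1, \<beta>)" by (cases p1)
      have h1: "p1 \<in> E2" "org2 p1 = Inr m" "RP2 (org2 (rv2 p1)) P1 (Inr m)" "P1 \<noteq> [] \<longrightarrow> hd P1 \<noteq> rv2 p1"
        using R P Inr by simp_all
      have e1E: "e1 \<in> E" using h1(1) p1 by simp
      have \<beta>: "\<beta> = True" using h1(2) p1 by (cases \<beta>) simp_all
      have m: "m = {e1, rv e1}" using h1(2) p1 \<beta> by simp
      have R1: "RP2 (Inl (org e1)) P1 (Inr m)" using h1(3) p1 \<beta> by simp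
      have P1ne: "P1 \<noteq> []" using R1 by (cases P1) auto
      then obtain P2 pl where P1: "P1 = P2 @ [pl]" by (metis rev_exhaust)
      obtain z where z: "RP2 (Inl (org e1)) P2 z" "RP2 z [pl] (Inr m)" using S2.rp_appendD R1 P1 by blast
      obtain e2 \<beta>2 where pl: "pl = (e2, \<beta>2)" by (cases pl)
      have hl: "e2 \<in> E" "org2 (e2, \<beta>2) = z" "org2 (e2, \<not> \<beta>2) = Inr m" using z(2) pl by simp_all
      have \<beta>2: "\<beta>2 = False" using hl(3) by (cases \<beta>2) simp_all
      have zz: "z = Inl (org e2)" using hl(2) \<beta>2 by simp
      have "{e2, rv e2} = {e1, rv e1}" using hl(3) \<beta>2 m by simp
      hence e2: "e2 = e1 \<or> e2 = rv e1" by (rule pair_eq)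
      obtain Q2 where Q2: "RP (org e1) Q2 (org e2)" "P2 = lift Q2" using proj z(1) zz by blast
      have "hd P1 = (e1, False)"
      proof (cases "e2 = e1")
        case True
        hence "Q2 = []" using Q2(1) no_cycle by simp
        thus ?thesis using P1 Q2(2) pl \<beta>2 True by simp
      next
        case False
        hence e2': "e2 = rv e1" using e2 by simp
        have "RP (org e1) [e1] (org (rv e1))" using e1E E_org E_trm by simp
        hence "Q2 = [e1]" using rp_unique Q2(1) e2' by simp
        thus ?thesis using P1 Q2(2) by simp
      qed
      thus False using h1(4) P1ne p1 \<beta> by simp
    qed
  qed
qed

lemma base_path: "P \<in> V2 \<Longrightarrow> \<exists>a r1 r2. PT2 P r1 (Inl a) \<and> PT2 (Inl a) r2 P"
proof -
  assume P: "P \<in> V2"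
  show ?thesis
  proof (cases P)
    case (Inl a) thus ?thesis using P by (intro exI[of _ a] exI[of _ "[]"]) simp
  next
    case (Inr m)
    then obtain e where e: "e \<in> E" "m = {e, rv e}" using P unfolding V2_def by auto
    have "PT2 P [(e, True)] (Inl (org e))" using e Inr Inr_V2[OF e(1)] E_org[OF e(1)] by simp
    moreover have "PT2 (Inl (org e)) [(e, False)] P" using e Inr Inr_V2[OF e(1)] E_org[OF e(1)] by simp
    ultimately show ?thesis by blast
  qed
qed

lemma tree2: "is_tree V2 E2 org2 rv2"
proof -
  interpret S2: sgraph V2 E2 org2 rv2 by (rule sgraph.intro[OF sg2])
  have conn: "\<exists>es. S2.PT P es Q" if P: "P \<in> V2" and Q: "Q \<in> V2" for P Q
  proof -
    obtain a r1 r2 where A: "PT2 P r1 (Inl a)" "PT2 (Inl a) r2 P" using base_path[OF P] by blast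
    obtain b s1 s2 where B: "PT2 Q s1 (Inl b)" "PT2 (Inl b) s2 Q" using base_path[OF Q] by blast
    have aV: "a \<in> V" using S2.pth_V[OF A(1)] by simp
    have bV: "b \<in> V" using S2.pth_V[OF B(1)] by simp
    have M: "PT2 (Inl a) (lift (geo a b)) (Inl b)" using lift_pth[OF geo[OF aV bV]] .
    have "PT2 P (r1 @ (lift (geo a b) @ s2)) Q" using S2.pth_append[OF A(1) S2.pth_append[OF M B(2)]] .
    thus ?thesis by blast
  qed
  have V2ne: "V2 \<noteq> {}"
  proof -
    have "connected_graph V E org rv" using tree unfolding is_tree_def by simp
    hence "V \<noteq> {}" unfolding connected_graph_def by simp
    thus ?thesis unfolding V2_def by simp
  qed
  have cg: "connected_graph V2 E2 org2 rv2"
    unfolding connected_graph_def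
  proof (intro conjI ballI V2ne)
    fix P Q assume P: "P \<in> V2" and Q: "Q \<in> V2"
    obtain es where es: "S2.PT P es Q" using conn[OF P Q] by blast
    show "P = Q \<or> (\<exists>es. es \<noteq> [] \<and> is_path E2 org2 rv2 es \<and> org2 (hd es) = P \<and> org2 (rv2 (last es)) = Q)"
    proof (cases "es = []")
      case True thus ?thesis using es by simp
    next
      case False thus ?thesis using es S2.pth_Cons_iff_path[OF False] by blast
    qed
  qed
  have nc: "\<not> (\<exists>es. es \<noteq> [] \<and> reduced_path E2 org2 rv2 es \<and> org2 (rv2 (last es)) = org2 (hd es))"
  proof
    assume "\<exists>es. es \<noteq> [] \<and> reduced_path E2 org2 rv2 es \<and> org2 (rv2 (last es)) = org2 (hd es)"
    then obtain es where es: "es \<noteq> []" "reduced_path E2 org2 rv2 es" "org2 (rv2 (last es)) = org2 (hd es)" by blast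
    have "RP2 (org2 (hd es)) es (org2 (hd es))" using S2.rp_Cons_iff_reduced[OF es(1)] es by simp
    thus False using no_cycle2 es(1) by blast
  qed
  show ?thesis unfolding is_tree_def using sg2 cg nc by blast
qed

end

context tact begin

definition \<phi>V2 where "\<phi>V2 g x = (case x of Inl y \<Rightarrow> Inl (\<phi>V g y) | Inr m \<Rightarrow> Inr (\<phi>E g ` m))"
definition \<phi>E2 where "\<phi>E2 g = (\<lambda>(e, b). (\<phi>E g e, b))"

lemma \<phi>V2_Inl[simp]: "\<phi>V2 g (Inl y) = Inl (\<phi>V g y)" by (simp add: \<phi>V2_def)
lemma \<phi>V2_Inr[simp]: "\<phi>V2 g (Inr m) = Inr (\<phi>E g ` m)" by (simp add: \<phi>V2_def)
lemma \<phi>E2_simp[simp]: "\<phi>E2 g (e, b) = (\<phi>E g e, b)" by (simp add: \<phi>E2_def)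

lemma pair_img: "g \<in> carrier G \<Longrightarrow> e \<in> E \<Longrightarrow> \<phi>E g ` {e, rv e} = {\<phi>E g e, rv (\<phi>E g e)}"
  using rvc by simp

lemma V2_cases: "x \<in> V2 \<Longrightarrow> (\<And>y. x = Inl y \<Longrightarrow> y \<in> V \<Longrightarrow> P) \<Longrightarrow> (\<And>e. x = Inr {e, rv e} \<Longrightarrow> e \<in> E \<Longrightarrow> P) \<Longrightarrow> P"
  unfolding V2_def by blast

lemma tact2_ax: "tact_axioms V2 E2 org2 rv2 G \<phi>V2 \<phi>E2"
proof (rule tact_axioms.intro)
  show "group G" by (rule grp)
next
  fix g x assume g: "g \<in> carrier G" and x: "x \<in> V2"
  show "\<phi>V2 g x \<in> V2"
  proof (rule V2_cases[OF x])
    fix y assume "x = Inl y" "y \<in> V" thus ?thesis using actV[OF g] by simp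
  next
    fix e assume xe: "x = Inr {e, rv e}" and e: "e \<in> E"
    show ?thesis using xe pair_img[OF g e] Inr_V2[OF actE[OF g e]] by simp
  qed
next
  fix g e assume g: "g \<in> carrier G" and e: "e \<in> E2"
  obtain e0 b where "e = (e0, b)" by (cases e)
  thus "\<phi>E2 g e \<in> E2" using e actE[OF g] by simp
next
  fix g h x assume g: "g \<in> carrier G" and h: "h \<in> carrier G" and x: "x \<in> V2"
  show "\<phi>V2 (g \<otimes> h) x = \<phi>V2 g (\<phi>V2 h x)"
  proof (rule V2_cases[OF x])
    fix y assume "x = Inl y" "y \<in> V" thus ?thesis using mulV[OF g h] by simp
  next
    fix e assume xe: "x = Inr {e, rv e}" and e: "e \<in> E"
    show ?thesis using xe mulE[OF g h e] mulE[OF g h E_rv[OF e]] by simp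
  qed
next
  fix g h e assume g: "g \<in> carrier G" and h: "h \<in> carrier G" and e: "e \<in> E2"
  obtain e0 b where "e = (e0, b)" by (cases e)
  thus "\<phi>E2 (g \<otimes> h) e = \<phi>E2 g (\<phi>E2 h e)" using e mulE[OF g h] by simp
next
  fix x assume x: "x \<in> V2"
  show "\<phi>V2 \<one> x = x"
  proof (rule V2_cases[OF x])
    fix y assume "x = Inl y" "y \<in> V" thus ?thesis using oneV by simp
  next
    fix e assume xe: "x = Inr {e, rv e}" and e: "e \<in> E"
    show ?thesis using xe oneE[OF e] oneE[OF E_rv[OF e]] by simp
  qed
next
  fix e assume e: "e \<in> E2"
  obtain e0 b where "e = (e0, b)" by (cases e)
  thus "\<phi>E2 \<one> e = e" using e oneE by simp
next
  fix g e assume g: "g \<in> carrier G" and e: "e \<in> E2"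
  obtain e0 b where eb: "e = (e0, b)" by (cases e)
  have e0: "e0 \<in> E" using e eb by simp
  show "\<phi>V2 g (org2 e) = org2 (\<phi>E2 g e)"
    using eb orgc[OF g e0] pair_img[OF g e0] by (cases b) simp_all
next
  fix g e assume g: "g \<in> carrier G" and e: "e \<in> E2"
  obtain e0 b where eb: "e = (e0, b)" by (cases e)
  show "\<phi>E2 g (rv2 e) = rv2 (\<phi>E2 g e)" using eb by simp
qed

lemma tact2: "tact V2 E2 org2 rv2 G \<phi>V2 \<phi>E2"
proof -
  have st: "stree V2 E2 org2 rv2" by (intro stree.intro sgraph.intro stree_axioms.intro sg2 tree2)
  show ?thesis by (rule tact.intro[OF st tact2_ax])
qed

lemma noinv2: "g \<in> carrier G \<Longrightarrow> e \<in> E2 \<Longrightarrow> \<phi>E2 g e \<noteq> rv2 e"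
  by (cases e) simp

lemma stabfin2:
  assumes stabV: "\<And>x. x \<in> V \<Longrightarrow> finite {g \<in> carrier G. \<phi>V g x = x}"
    and stabE: "\<And>e. e \<in> E \<Longrightarrow> finite {g \<in> carrier G. \<phi>E g e = e}"
    and x: "x \<in> V2"
  shows "finite {g \<in> carrier G. \<phi>V2 g x = x}"
proof (rule V2_cases[OF x])
  fix y assume xy: "x = Inl y" and y: "y \<in> V"
  have "{g \<in> carrier G. \<phi>V2 g x = x} = {g \<in> carrier G. \<phi>V g y = y}" using xy by simp
  thus ?thesis using stabV[OF y] by simp
next
  fix e assume xe: "x = Inr {e, rv e}" and e: "e \<in> E"
  define S1 where "S1 = {g \<in> carrier G. \<phi>E g e = e}"
  define S2 where "S2 = {g \<in> carrier G. \<phi>E g e = rv e}"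
  have sub: "{g \<in> carrier G. \<phi>V2 g x = x} \<subseteq> S1 \<union> S2"
  proof
    fix g assume "g \<in> {g \<in> carrier G. \<phi>V2 g x = x}"
    hence g: "g \<in> carrier G" "\<phi>E g ` {e, rv e} = {e, rv e}" using xe by auto
    hence "\<phi>E g e \<in> {e, rv e}" by blast
    thus "g \<in> S1 \<union> S2" unfolding S1_def S2_def using g(1) by auto
  qed
  have f1: "finite S1" unfolding S1_def using stabE[OF e] .
  have f2: "finite S2"
  proof (cases "S2 = {}")
    case True thus ?thesis by simp
  next
    case False
    then obtain g0 where g0: "g0 \<in> carrier G" "\<phi>E g0 e = rv e" unfolding S2_def by blast
    have "S2 \<subseteq> (\<lambda>s. g0 \<otimes> s) ` S1"
    proof
      fix g assume "g \<in> S2"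
      hence g: "g \<in> carrier G" "\<phi>E g e = rv e" unfolding S2_def by auto
      define s where "s = inv g0 \<otimes> g"
      have sc: "s \<in> carrier G" using s_def g g0 by simp
      have "\<phi>E s e = \<phi>E (inv g0) (rv e)" using mulE[OF grp.inv_closed[OF g0(1)] g(1) e] g(2) s_def by simp
      also have "\<dots> = e" using invE[OF g0(1) e] g0(2) by simp
      finally have "s \<in> S1" unfolding S1_def using sc by simp
      moreover have "g0 \<otimes> s = g" using s_def g g0 by (simp add: grp.m_assoc[symmetric] grp.r_inv)
      ultimately show "g \<in> (\<lambda>s. g0 \<otimes> s) ` S1" by (metis image_eqI)
    qed
    thus ?thesis using f1 finite_subset by blast
  qed
  show ?thesis using sub f1 f2 finite_subset by blast
qed

lemma orbfin2:
  assumes "finite ((\<lambda>e. {\<phi>E g e | g. g \<in> carrier G}) ` E)"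
  shows "finite ((\<lambda>x. {\<phi>E2 g x | g. g \<in> carrier G}) ` E2)"
proof -
  define Ob where "Ob = (\<lambda>e. {\<phi>E g e | g. g \<in> carrier G}) ` E"
  have "(\<lambda>x. {\<phi>E2 g x | g. g \<in> carrier G}) ` E2 \<subseteq> (\<lambda>(Oq, b). Oq \<times> {b}) ` (Ob \<times> (UNIV :: bool set))"
  proof
    fix Xs assume "Xs \<in> (\<lambda>x. {\<phi>E2 g x | g. g \<in> carrier G}) ` E2"
    then obtain e b where eb: "e \<in> E" "Xs = {\<phi>E2 g (e, b) | g. g \<in> carrier G}" unfolding E2_def by auto
    have "Xs = {\<phi>E g e | g. g \<in> carrier G} \<times> {b}" using eb(2) by auto
    moreover have "{\<phi>E g e | g. g \<in> carrier G} \<in> Ob" unfolding Ob_def using eb(1) by blast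
    ultimately show "Xs \<in> (\<lambda>(Oq, b). Oq \<times> {b}) ` (Ob \<times> (UNIV :: bool set))" by force
  qed
  moreover have "finite (Ob \<times> (UNIV :: bool set))" using assms Ob_def by simp
  ultimately show ?thesis using finite_subset by blast
qed

lemma ext2:
  assumes noterm: "\<And>x. x \<in> V \<Longrightarrow> \<not> terminal_vertex E org x"
    and e: "e \<in> E2"
  shows "\<exists>f\<in>E2. org2 f = org2 (rv2 e) \<and> f \<noteq> rv2 e"
proof -
  obtain e0 b where eb: "e = (e0, b)" by (cases e)
  have e0: "e0 \<in> E" using e eb by simp
  show ?thesis
  proof (cases b)
    case False
    have "org2 (rv e0, True) = org2 (rv2 e)" using eb False pair_rv[OF e0] by simp
    moreover have "(rv e0, True) \<noteq> rv2 e" using eb False rv_neq[OF e0] by simp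
    moreover have "(rv e0, True) \<in> E2" using E_rv[OF e0] by simp
    ultimately show ?thesis by blast
  next
    case True
    define S where "S = {f \<in> E. org f = org e0}"
    have "\<exists>f\<in>S. f \<noteq> e0"
    proof (rule ccontr)
      assume "\<not> (\<exists>f\<in>S. f \<noteq> e0)"
      hence "S = {e0}" unfolding S_def using e0 by auto
      hence "terminal_vertex E org (org e0)" unfolding terminal_vertex_def valence_def S_def by simp
      thus False using noterm[OF E_org[OF e0]] by simp
    qed
    then obtain f where f: "f \<in> E" "org f = org e0" "f \<noteq> e0" unfolding S_def by blast
    have "org2 (f, False) = org2 (rv2 e)" using eb True f by simp
    moreover have "(f, False) \<noteq> rv2 e" using eb True f by simp
    moreover have "(f, False) \<in> E2" using f by simp
    ultimately show ?thesis by blast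
  qed
qed

lemma val2_Inl: "card {x \<in> E2. org2 x = Inl y} = card {e \<in> E. org e = y}"
proof -
  have "{x \<in> E2. org2 x = Inl y} = (\<lambda>e. (e, False)) ` {e \<in> E. org e = y}"
  proof
    show "{x \<in> E2. org2 x = Inl y} \<subseteq> (\<lambda>e. (e, False)) ` {e \<in> E. org e = y}"
    proof
      fix x assume x: "x \<in> {x \<in> E2. org2 x = Inl y}"
      obtain e b where eb: "x = (e, b)" by (cases x)
      show "x \<in> (\<lambda>e. (e, False)) ` {e \<in> E. org e = y}" using x eb by (cases b) auto
    qed
  qed auto
  moreover have "inj_on (\<lambda>e. (e, False)) {e \<in> E. org e = y}" by (rule inj_onI) simp
  ultimately show ?thesis by (simp add: card_image)
qed

lemma val2_Inr: "e \<in> E \<Longrightarrow> card {x \<in> E2. org2 x = Inr {e, rv e}} = 2"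
proof -
  assume e: "e \<in> E"
  have "{x \<in> E2. org2 x = Inr {e, rv e}} = {(e, True), (rv e, True)}"
  proof
    show "{x \<in> E2. org2 x = Inr {e, rv e}} \<subseteq> {(e, True), (rv e, True)}"
    proof
      fix x assume x: "x \<in> {x \<in> E2. org2 x = Inr {e, rv e}}"
      obtain e2 b where eb: "x = (e2, b)" by (cases x)
      have b: "b = True" using x eb by (cases b) auto
      hence "{e2, rv e2} = {e, rv e}" using x eb by simp
      hence "e2 = e \<or> e2 = rv e" by (rule pair_eq)
      thus "x \<in> {(e, True), (rv e, True)}" using eb b by auto
    qed
    show "{(e, True), (rv e, True)} \<subseteq> {x \<in> E2. org2 x = Inr {e, rv e}}"
      using e E_rv[OF e] pair_rv[OF e] by simp
  qed
  thus ?thesis using rv_neq[OF e] by simp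
qed

end

context amalg begin

theorem main: "\<exists>x\<in>V. (\<forall>a\<in>A. \<phi>V a x = x) \<and> card {e \<in> E. org e = x} = 3"
proof -
  obtain v u where vu: "v \<in> FA" "u \<in> FB" "\<forall>v'\<in>FA. \<forall>u'\<in>FB. dist v u \<le> dist v' u'" using min_pair by blast
  have am: "amalg V E org rv G \<phi>V \<phi>E A B C" by intro_locales
  interpret amalg_min V E org rv G \<phi>V \<phi>E A B C v u
    using vu by (intro amalg_min.intro am amalg_min_axioms.intro) auto
  show ?thesis by (rule result)
qed

end

context tact begin

lemma subdiv_result:
  assumes A: "subgroup A G" and B: "subgroup B G" and C: "C = A \<inter> B"
    and gen: "generate G (A \<union> B) = carrier G"
    and Afin: "finite A" and cardA: "card A = 24" and cardC: "card C = 8"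
    and Bfin: "finite B" and CB: "C \<noteq> B"
    and nf: "\<And>a b k. a \<in> A - C \<Longrightarrow> b \<in> B - C \<Longrightarrow> k > 0 \<Longrightarrow> (a \<otimes> b) [^] (k::nat) \<noteq> \<one>"
    and stabV: "\<And>x. x \<in> V \<Longrightarrow> finite {g \<in> carrier G. \<phi>V g x = x}"
    and stabE: "\<And>e. e \<in> E \<Longrightarrow> finite {g \<in> carrier G. \<phi>E g e = e}"
    and orbE: "finite ((\<lambda>e. {\<phi>E g e | g. g \<in> carrier G}) ` E)"
    and noterm: "\<And>x. x \<in> V \<Longrightarrow> \<not> terminal_vertex E org x"
  shows "\<exists>x\<in>V. (\<forall>a\<in>A. \<phi>V a x = x) \<and> card {e \<in> E. org e = x} = 3"
proof -
  have ax: "amalg_axioms V2 E2 org2 rv2 G \<phi>V2 \<phi>E2 A B C"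
  proof (rule amalg_axioms.intro)
    show "\<And>g e. g \<in> carrier G \<Longrightarrow> e \<in> E2 \<Longrightarrow> \<phi>E2 g e \<noteq> rv2 e" by (rule noinv2)
    show "\<And>x. x \<in> V2 \<Longrightarrow> finite {g \<in> carrier G. \<phi>V2 g x = x}" by (rule stabfin2[OF stabV stabE])
    show "finite ((\<lambda>e. {\<phi>E2 g e | g. g \<in> carrier G}) ` E2)" by (rule orbfin2[OF orbE])
    show "\<And>e. e \<in> E2 \<Longrightarrow> \<exists>f\<in>E2. org2 f = org2 (rv2 e) \<and> f \<noteq> rv2 e" by (rule ext2[OF noterm])
  qed (use A B C gen Afin cardA cardC Bfin CB nf in auto)
  interpret X2: amalg V2 E2 org2 rv2 G \<phi>V2 \<phi>E2 A B C by (rule amalg.intro[OF tact2 ax])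
  obtain x' where x': "x' \<in> V2" "\<forall>a\<in>A. \<phi>V2 a x' = x'" "card {e \<in> E2. org2 e = x'} = 3"
    using X2.main by blast
  show ?thesis
  proof (rule V2_cases[OF x'(1)])
    fix y assume xy: "x' = Inl y" and y: "y \<in> V"
    have "\<forall>a\<in>A. \<phi>V a y = y" using x'(2) xy by simp
    moreover have "card {e \<in> E. org e = y} = 3" using x'(3) xy val2_Inl by simp
    ultimately show ?thesis using y by blast
  next
    fix e assume xe: "x' = Inr {e, rv e}" and e: "e \<in> E"
    have "card {x \<in> E2. org2 x = x'} = 2" using xe val2_Inr[OF e] by simp
    thus ?thesis using x'(3) by simp
  qed
qed

end


definition rotf :: "nat \<Rightarrow> nat \<Rightarrow> nat \<Rightarrow> nat" where
  "rotf m k = (\<lambda>i. if i < m then (k + i) mod m else i)"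
definition reff :: "nat \<Rightarrow> nat \<Rightarrow> nat \<Rightarrow> nat" where
  "reff m k = (\<lambda>i. if i < m then (k + m - i) mod m else i)"

lemma dihedral_carrier: "carrier (dihedral_group m) = rotf m ` {..<m} \<union> reff m ` {..<m}"
  unfolding dihedral_group_def rotf_def reff_def by auto

lemma rot_inj: "inj_on (rotf m) {..<m}"
proof (rule inj_onI)
  fix k k' assume "k \<in> {..<m}" "k' \<in> {..<m}" "rotf m k = rotf m k'"
  hence "rotf m k 0 = rotf m k' 0" "k < m" "k' < m" by auto
  thus "k = k'" unfolding rotf_def by simp
qed

lemma ref_inj: "inj_on (reff m) {..<m}"
proof (rule inj_onI)
  fix k k' assume "k \<in> {..<m}" "k' \<in> {..<m}" "reff m k = reff m k'"
  hence "reff m k 0 = reff m k' 0" "k < m" "k' < m" by auto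
  thus "k = k'" unfolding reff_def by simp
qed

lemma rot_ref_disj: "m \<ge> 3 \<Longrightarrow> rotf m ` {..<m} \<inter> reff m ` {..<m} = {}"
proof (rule ccontr)
  assume m: "m \<ge> 3" and "rotf m ` {..<m} \<inter> reff m ` {..<m} \<noteq> {}"
  then obtain k k' where kk: "k < m" "k' < m" "rotf m k = reff m k'" by auto
  have "rotf m k 0 = reff m k' 0" using kk by simp
  hence k': "k' = k" using kk unfolding rotf_def reff_def by simp
  have "rotf m k 1 = reff m k 1" using kk k' by simp
  hence eq: "(k + 1) mod m = (k + m - 1) mod m" using m unfolding rotf_def reff_def by simp
  show False
  proof (cases "k + 1 < m")
    case True
    hence l: "(k + 1) mod m = k + 1" by simp
    show False
    proof (cases "k = 0")
      case True
      have "(k + m - 1) mod m = m - 1" using True m by simp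
      thus False using eq l True m by simp
    next
      case False
      then obtain t where t: "k = Suc t" by (cases k) auto
      have "k + m - 1 = t + m" using t by simp
      hence "(k + m - 1) mod m = t mod m" by simp
      also have "\<dots> = t" using kk(1) t by simp
      finally show False using eq l t by simp
    qed
  next
    case False
    hence k1: "k + 1 = m" using kk(1) by simp
    have "(k + 1) mod m = 0" using k1 by simp
    moreover have "k + m - 1 = (m - 2) + m" using k1 m by arith
    hence "(k + m - 1) mod m = (m - 2) mod m" by simp
    hence "(k + m - 1) mod m = m - 2" using m by simp
    ultimately show False using eq m by simp
  qed
qed

lemma dihedral_card: "m \<ge> 3 \<Longrightarrow> card (carrier (dihedral_group m)) = 2 * m"
proof -
  assume m: "m \<ge> 3"
  have "card (rotf m ` {..<m} \<union> reff m ` {..<m}) = card (rotf m ` {..<m}) + card (reff m ` {..<m})"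
    using rot_ref_disj[OF m] by (intro card_Un_disjoint) auto
  also have "\<dots> = m + m" using card_image[OF rot_inj] card_image[OF ref_inj] by simp
  finally show ?thesis using dihedral_carrier by simp
qed

lemma dihedral_finite: "finite (carrier (dihedral_group m))"
  using dihedral_carrier by simp

lemma sym4_card: "card (carrier (sym_group 4)) = 24"
proof -
  have "card {p. p permutes {1..(4::nat)}} = fact 4" by (rule card_permutations) simp_all
  thus ?thesis unfolding sym_group_def by (simp add: fact_numeral)
qed

lemma iso_card: "G \<cong> H \<Longrightarrow> card (carrier G) = card (carrier H)"
  unfolding is_iso_def iso_def using bij_betw_same_card by blast

lemma iso_finite: "G \<cong> H \<Longrightarrow> finite (carrier H) \<Longrightarrow> finite (carrier G)"
  unfolding is_iso_def iso_def using bij_betw_finite by blast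

lemma concat_rep_nth: "i < 2 * k \<Longrightarrow> concat (replicate k [a, b]) ! i = (if even i then a else b)"
proof (induction k arbitrary: i)
  case 0 thus ?case by simp
next
  case (Suc k)
  show ?case
  proof (cases i)
    case 0 thus ?thesis by simp
  next
    case (Suc j)
    show ?thesis
    proof (cases j)
      case 0 thus ?thesis using Suc by simp
    next
      case (Suc l)
      have "l < 2 * k" using Suc.prems \<open>i = Suc j\<close> Suc by simp
      thus ?thesis using Suc.IH[of l] \<open>i = Suc j\<close> Suc by simp
    qed
  qed
qed

lemma alternating_rep:
  assumes "a \<in> P" "b \<in> Q"
  shows "alternating P Q (concat (replicate k [a, b]))"
  unfolding alternating_def
proof (intro conjI allI impI)
  fix i assume "i < length (concat (replicate k [a, b]))"
  hence "i < 2 * k" by (simp add: length_concat sum_list_replicate)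
  thus "concat (replicate k [a, b]) ! i \<in> P \<union> Q" using concat_rep_nth[of i k a b] assms by (cases "even i") simp_all
next
  fix i assume "Suc i < length (concat (replicate k [a, b]))"
  hence i: "Suc i < 2 * k" by (simp add: length_concat sum_list_replicate)
  show "concat (replicate k [a, b]) ! i \<in> P \<and> concat (replicate k [a, b]) ! Suc i \<in> Q \<or>
        concat (replicate k [a, b]) ! i \<in> Q \<and> concat (replicate k [a, b]) ! Suc i \<in> P"
    using concat_rep_nth[of i k a b] concat_rep_nth[OF i, of a b] i assms by auto
qed

lemma (in group) foldr_rep: "a \<in> carrier G \<Longrightarrow> b \<in> carrier G \<Longrightarrow>
  foldr (\<otimes>) (concat (replicate k [a, b])) \<one> = (a \<otimes> b) [^] k"
proof (induction k)
  case 0 thus ?case by simp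
next
  case (Suc k)
  have "foldr (\<otimes>) (concat (replicate (Suc k) [a, b])) \<one> = a \<otimes> (b \<otimes> (a \<otimes> b) [^] k)"
    using Suc by simp
  also have "\<dots> = (a \<otimes> b) \<otimes> (a \<otimes> b) [^] k" using Suc.prems by (simp add: m_assoc)
  also have "\<dots> = (a \<otimes> b) [^] Suc k" using nat_pow_Suc2[of "a \<otimes> b" k] Suc.prems by (simp del: nat_pow_Suc)
  finally show ?case .
qed


theorem theorem7p6:
  fixes n :: nat
    and V :: "'v set" and E :: "'e set" and org :: "'e \<Rightarrow> 'v" and rv :: "'e \<Rightarrow> 'e"
    and \<phi>V :: "(complex^2^2) set \<Rightarrow> 'v \<Rightarrow> 'v" and \<phi>E :: "(complex^2^2) set \<Rightarrow> 'e \<Rightarrow> 'e"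
    and A B C :: "(complex^2^2) set set"
  assumes "4 dvd n" and "n \<ge> 8"
    and "S4_D4_Dn_amalgam n (PCG n) A B C"
    and "is_tree V E org rv"
    and "\<forall>v \<in> V. \<not> terminal_vertex E org v"
    and "graph_action (PCG n) V E org rv \<phi>V \<phi>E"
    and "\<forall>v \<in> V. finite (stabilizer (PCG n) \<phi>V v)"
    and "\<forall>e \<in> E. finite (stabilizer (PCG n) \<phi>E e)"
    and "finite (orbits (PCG n) V \<phi>V)" and "finite (orbits (PCG n) E \<phi>E)"
  shows "\<exists>v \<in> V. (\<forall>g \<in> A. \<phi>V g v = v) \<and> valence E org v = 3"
proof -
  let ?G = "PCG n"
  have am: "amalgam_decomposition ?G A B C" and isoA: "?G\<lparr>carrier := A\<rparr> \<cong> sym_group 4"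
    and isoB: "?G\<lparr>carrier := B\<rparr> \<cong> dihedral_group n" and isoC: "?G\<lparr>carrier := C\<rparr> \<cong> dihedral_group 4"
    using assms(3) unfolding S4_D4_Dn_amalgam_def by auto
  have subA: "subgroup A ?G" and subB: "subgroup B ?G" and Ceq: "C = A \<inter> B"
    and gen: "generate ?G (A \<union> B) = carrier ?G"
    and nw: "\<And>ws. ws \<noteq> [] \<Longrightarrow> alternating (A - C) (B - C) ws \<Longrightarrow> foldr (\<otimes>\<^bsub>?G\<^esub>) ws \<one>\<^bsub>?G\<^esub> \<noteq> \<one>\<^bsub>?G\<^esub>"
    using am unfolding amalgam_decomposition_def by auto
  have gV: "group_action ?G V \<phi>V" and gE: "group_action ?G E \<phi>E"
    and cmp: "\<And>g e. g \<in> carrier ?G \<Longrightarrow> e \<in> E \<Longrightarrow> \<phi>V g (org e) = org (\<phi>E g e) \<and> \<phi>E g (rv e) = rv (\<phi>E g e)"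
    using assms(6) unfolding graph_action_def by auto
  have grp: "group ?G" using group_hom.axioms(1)[OF group_action.group_hom[OF gV]] .
  have sg: "serre_graph V E org rv" using assms(4) unfolding is_tree_def by simp
  have oneV: "\<phi>V \<one>\<^bsub>?G\<^esub> x = x" if "x \<in> V" for x
    using fun_cong[OF group_action.id_eq_one[OF gV], of x] that by simp
  have oneE: "\<phi>E \<one>\<^bsub>?G\<^esub> x = x" if "x \<in> E" for x
    using fun_cong[OF group_action.id_eq_one[OF gE], of x] that by simp
  have tax: "tact_axioms V E org rv ?G \<phi>V \<phi>E"
  proof (rule tact_axioms.intro)
    show "group ?G" by (rule grp)
    show "\<And>g x. g \<in> carrier ?G \<Longrightarrow> x \<in> V \<Longrightarrow> \<phi>V g x \<in> V"
      using group_action.element_image[OF gV] by blast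
    show "\<And>g e. g \<in> carrier ?G \<Longrightarrow> e \<in> E \<Longrightarrow> \<phi>E g e \<in> E"
      using group_action.element_image[OF gE] by blast
    show "\<And>g h x. g \<in> carrier ?G \<Longrightarrow> h \<in> carrier ?G \<Longrightarrow> x \<in> V \<Longrightarrow> \<phi>V (g \<otimes>\<^bsub>?G\<^esub> h) x = \<phi>V g (\<phi>V h x)"
      using group_action.composition_rule[OF gV] by blast
    show "\<And>g h x. g \<in> carrier ?G \<Longrightarrow> h \<in> carrier ?G \<Longrightarrow> x \<in> E \<Longrightarrow> \<phi>E (g \<otimes>\<^bsub>?G\<^esub> h) x = \<phi>E g (\<phi>E h x)"
      using group_action.composition_rule[OF gE] by blast
    show "\<And>x. x \<in> V \<Longrightarrow> \<phi>V \<one>\<^bsub>?G\<^esub> x = x" by (rule oneV)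
    show "\<And>x. x \<in> E \<Longrightarrow> \<phi>E \<one>\<^bsub>?G\<^esub> x = x" by (rule oneE)
    show "\<And>g e. g \<in> carrier ?G \<Longrightarrow> e \<in> E \<Longrightarrow> \<phi>V g (org e) = org (\<phi>E g e)" using cmp by blast
    show "\<And>g e. g \<in> carrier ?G \<Longrightarrow> e \<in> E \<Longrightarrow> \<phi>E g (rv e) = rv (\<phi>E g e)" using cmp by blast
  qed
  have st: "stree V E org rv" by (intro stree.intro sgraph.intro stree_axioms.intro sg assms(4))
  interpret X: tact V E org rv ?G \<phi>V \<phi>E by (rule tact.intro[OF st tax])
  have cardA: "card A = 24" using iso_card[OF isoA] sym4_card by simp
  have cardC: "card C = 8" using iso_card[OF isoC] dihedral_card[of 4] by simp
  have cardB: "card B = 2 * n" using iso_card[OF isoB] dihedral_card[of n] assms(2) by simp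
  have Bfin: "finite B" using iso_finite[OF isoB dihedral_finite] by simp
  have Afin: "finite A" using cardA card_ge_0_finite by (metis zero_less_numeral)
  have CB: "C \<noteq> B" using cardB cardC assms(2) by auto
  have nf: "(a \<otimes>\<^bsub>?G\<^esub> b) [^]\<^bsub>?G\<^esub> (k::nat) \<noteq> \<one>\<^bsub>?G\<^esub>" if a: "a \<in> A - C" and b: "b \<in> B - C" and k: "k > 0" for a b k
  proof -
    have ac: "a \<in> carrier ?G" using a subgroup.mem_carrier[OF subA] by simp
    have bc: "b \<in> carrier ?G" using b subgroup.mem_carrier[OF subB] by simp
    have ne: "concat (replicate k [a, b]) \<noteq> []" using k by (cases k) auto
    have "foldr (\<otimes>\<^bsub>?G\<^esub>) (concat (replicate k [a, b])) \<one>\<^bsub>?G\<^esub> \<noteq> \<one>\<^bsub>?G\<^esub>"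
      using nw[OF ne alternating_rep[OF a b]] .
    thus ?thesis using group.foldr_rep[OF grp ac bc] by simp
  qed
  have stabV: "finite {g \<in> carrier ?G. \<phi>V g x = x}" if "x \<in> V" for x
    using assms(7) that unfolding stabilizer_def by simp
  have stabE: "finite {g \<in> carrier ?G. \<phi>E g e = e}" if "e \<in> E" for e
    using assms(8) that unfolding stabilizer_def by simp
  have "orbits ?G E \<phi>E = (\<lambda>e. {\<phi>E g e | g. g \<in> carrier ?G}) ` E"
    unfolding orbits_def orbit_def by auto
  hence orbE: "finite ((\<lambda>e. {\<phi>E g e | g. g \<in> carrier ?G}) ` E)" using assms(10) by simp
  have noterm: "\<not> terminal_vertex E org x" if "x \<in> V" for x using assms(5) that by simp
  obtain x where x: "x \<in> V" "\<forall>a\<in>A. \<phi>V a x = x" "card {e \<in> E. org e = x} = 3"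
    using X.subdiv_result[OF subA subB Ceq gen Afin cardA cardC Bfin CB nf stabV stabE orbE noterm] by blast
  show ?thesis using x unfolding valence_def by blast
qed


end
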